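(* Let $\mathcal{T}$ be a trivalent tree with $n\ge 3$ labelled leaves and $Q_{\mathcal{T}}(sl_3(\mathbb{C}))$ as in the context. For every proper subtree $\mathcal{T}'\subset\mathcal{T}$ there are exactly two minimal generators of $Q_{\mathcal{T}}(sl_3(\mathbb{C}))$ whose support is $\mathcal{T}'$, and every minimal generator arises in this way. Consequently $Q_{\mathcal{T}}(sl_3(\mathbb{C}))$ has exactly $2(2^n-n-1)$ minimal generators.
   Context: A Berenstein–Zelevinsky (BZ) triangle for $sl_3(\mathbb{C})$ is a $9$-tuple of nonnegative integers $(a,b,c,d,e,f,g,h,i)$ placed on the vertices of a triangular diagram with rows $a$; $b\ c$; $d\ e$; $f\ g\ h\ i$, so that the sides of the big triangle, oriented counterclockwise, read: side 1 $=(a,b,d,f)$, side 2 $=(f,g,h,i)$, side 3 $=(i,e,c,a)$, and $b,c,e,h,g,d$ form (in this cyclic order) a central hexagon. The entries satisfy $b+c=g+h$, $c+e=d+g$, $e+h=b+d$. The boundary weight of a side read as $(x_1,x_2,x_3,x_4)$ is $(x_1+x_2)\omega_1+(x_3+x_4)\omega_2$, identified with $(x_1+x_2,x_3+x_4)\in\mathbb{Z}_{\ge0}^2$. Let $\mathcal{T}$ be a tree whose non-leaf vertices (trinodes) all have degree $3$, with leaves labelled $1,\dots,n$. Attach to each trinode $v$ a BZ triangle, with a fixed bijection between its sides (counterclockwise) and the edges at $v$. $Q_{\mathcal{T}}(sl_3(\mathbb{C}))$ is the semigroup under entrywise addition of such assignments such that for each edge joining trinodes $v,v'$, if $v$'s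 side on that edge has boundary weight $(p,q)$ then $v'$'s side on it has boundary weight $(q,p)$. The weight on a leaf edge is the boundary weight of the corresponding side of the adjacent trinode's triangle. The support of $w\in Q_{\mathcal{T}}(sl_3(\mathbb{C}))$ is the set of edges of $\mathcal{T}$ on which the boundary weight of $w$ is nonzero. A subtree $\mathcal{T}'\subset\mathcal{T}$ (connected subgraph with at least one edge) is proper if every leaf of $\mathcal{T}'$ is a leaf of $\mathcal{T}$; proper subtrees correspond to subsets of at least two leaves of $\mathcal{T}$. *)

theory Defs
  imports Main
begin

definition adj :: "'v set set \<Rightarrow> 'v \<Rightarrow> 'v \<Rightarrow> bool" where
  "adj E u v \<longleftrightarrow> {u, v} \<in> E"

definition graph_connected :: "'v set \<Rightarrow> 'v set set \<Rightarrow> bool" where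
  "graph_connected V E \<longleftrightarrow> (\<forall>u\<in>V. \<forall>v\<in>V. (adj E)\<^sup>*\<^sup>* u v)"

definition simple_graph :: "'v set \<Rightarrow> 'v set set \<Rightarrow> bool" where
  "simple_graph V E \<longleftrightarrow> E \<subseteq> {{u, v} | u v. u \<in> V \<and> v \<in> V \<and> u \<noteq> v}"

definition is_tree :: "'v set \<Rightarrow> 'v set set \<Rightarrow> bool" where
  "is_tree V E \<longleftrightarrow> finite V \<and> simple_graph V E \<and> graph_connected V E \<and>
     (\<forall>e\<in>E. \<not> graph_connected V (E - {e}))"

definition deg :: "'v set set \<Rightarrow> 'v \<Rightarrow> nat" where
  "deg E v = card {e \<in> E. v \<in> e}"

definition leaves :: "'v set \<Rightarrow> 'v set set \<Rightarrow> 'v set" where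
  "leaves V E = {v \<in> V. deg E v = 1}"

definition trinodes :: "'v set \<Rightarrow> 'v set set \<Rightarrow> 'v set" where
  "trinodes V E = {v \<in> V. deg E v = 3}"

definition trivalent_tree :: "'v set \<Rightarrow> 'v set set \<Rightarrow> bool" where
  "trivalent_tree V E \<longleftrightarrow> is_tree V E \<and> (\<forall>v\<in>V. deg E v = 1 \<or> deg E v = 3)"

text \<open>Side labelling: at each trinode v, sides 1,2,3 (counterclockwise) are in bijection
  with the edges at v.\<close>
definition side_labelling :: "'v set \<Rightarrow> 'v set set \<Rightarrow> ('v \<Rightarrow> nat \<Rightarrow> 'v set) \<Rightarrow> bool" where
  "side_labelling V E sd \<longleftrightarrow>
     (\<forall>v\<in>trinodes V E. bij_betw (sd v) {1, 2, 3} {e \<in> E. v \<in> e})"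

definition proper_subtree :: "'v set \<Rightarrow> 'v set set \<Rightarrow> 'v set set \<Rightarrow> bool" where
  "proper_subtree V E E' \<longleftrightarrow> E' \<subseteq> E \<and> E' \<noteq> {} \<and> graph_connected (\<Union>E') E' \<and>
     (\<forall>x\<in>\<Union>E'. deg E' x = 1 \<longrightarrow> x \<in> leaves V E)"

text \<open>A BZ triangle (a,b,c,d,e,f,g,h,i) is encoded as t :: nat \<Rightarrow> nat with
  t 0 = a, t 1 = b, t 2 = c, t 3 = d, t 4 = e, t 5 = f, t 6 = g, t 7 = h, t 8 = i,
  and t k = 0 for k \<ge> 9.\<close>
definition is_bz :: "(nat \<Rightarrow> nat) \<Rightarrow> bool" where
  "is_bz t \<longleftrightarrow> t 1 + t 2 = t 6 + t 7 \<and> t 2 + t 4 = t 3 + t 6 \<and> t 4 + t 7 = t 1 + t 3 \<and>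
     (\<forall>k\<ge>9. t k = 0)"

text \<open>Boundary weights: side 1 = (a,b,d,f), side 2 = (f,g,h,i), side 3 = (i,e,c,a);
  a side (x1,x2,x3,x4) has weight (x1+x2, x3+x4).\<close>
definition side_weight :: "(nat \<Rightarrow> nat) \<Rightarrow> nat \<Rightarrow> nat \<times> nat" where
  "side_weight t j =
     (if j = 1 then (t 0 + t 1, t 3 + t 5)
      else if j = 2 then (t 5 + t 6, t 7 + t 8)
      else (t 8 + t 4, t 2 + t 0))"

text \<open>Elements: w v is the BZ triangle at trinode v (and identically 0 elsewhere).\<close>
definition inQ :: "'v set \<Rightarrow> 'v set set \<Rightarrow> ('v \<Rightarrow> nat \<Rightarrow> 'v set) \<Rightarrow> ('v \<Rightarrow> nat \<Rightarrow> nat) \<Rightarrow> bool" where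
  "inQ V E sd w \<longleftrightarrow>
     (\<forall>v. v \<notin> trinodes V E \<longrightarrow> (\<forall>k. w v k = 0)) \<and>
     (\<forall>v\<in>trinodes V E. is_bz (w v)) \<and>
     (\<forall>v\<in>trinodes V E. \<forall>v'\<in>trinodes V E. \<forall>j\<in>{1,2,3}. \<forall>j'\<in>{1,2,3}.
        v \<noteq> v' \<longrightarrow> sd v j = sd v' j' \<longrightarrow> side_weight (w v) j = prod.swap (side_weight (w v') j'))"

definition zeroQ :: "'v \<Rightarrow> nat \<Rightarrow> nat" where
  "zeroQ = (\<lambda>v k. 0)"

definition addQ :: "('v \<Rightarrow> nat \<Rightarrow> nat) \<Rightarrow> ('v \<Rightarrow> nat \<Rightarrow> nat) \<Rightarrow> ('v \<Rightarrow> nat \<Rightarrow> nat)" where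
  "addQ u w = (\<lambda>v k. u v k + w v k)"

text \<open>Support: edges on which the boundary weight is nonzero (the weight on an edge is read
  off from the side of an adjacent trinode; on internal edges the two readings agree up to swap).\<close>
definition supp :: "'v set \<Rightarrow> 'v set set \<Rightarrow> ('v \<Rightarrow> nat \<Rightarrow> 'v set) \<Rightarrow> ('v \<Rightarrow> nat \<Rightarrow> nat) \<Rightarrow> 'v set set" where
  "supp V E sd w = {e \<in> E. \<exists>v\<in>trinodes V E. \<exists>j\<in>{1,2,3}. sd v j = e \<and> side_weight (w v) j \<noteq> (0, 0)}"

definition min_gen :: "'v set \<Rightarrow> 'v set set \<Rightarrow> ('v \<Rightarrow> nat \<Rightarrow> 'v set) \<Rightarrow> ('v \<Rightarrow> nat \<Rightarrow> nat) \<Rightarrow> bool" where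
  "min_gen V E sd w \<longleftrightarrow> inQ V E sd w \<and> w \<noteq> zeroQ \<and>
     \<not> (\<exists>u1 u2. inQ V E sd u1 \<and> inQ V E sd u2 \<and> u1 \<noteq> zeroQ \<and> u2 \<noteq> zeroQ \<and> w = addQ u1 u2)"

end

theory Submission
  imports Defs
begin

definition gen :: "nat set \<Rightarrow> nat \<Rightarrow> nat" where
  "gen K = (\<lambda>k. if k \<in> K then 1 else 0)"

definition Gens :: "(nat \<Rightarrow> nat) set" where
  "Gens = {gen {0}, gen {5}, gen {8}, gen {3,4}, gen {2,6}, gen {1,7}, gen {2,3,7}, gen {1,4,6}}"

lemma nine: "(k::nat) < 9 \<Longrightarrow> k = 0 \<or> k = 1 \<or> k = 2 \<or> k = 3 \<or> k = 4 \<or> k = 5 \<or> k = 6 \<or> k = 7 \<or> k = 8"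
  by presburger

lemma tri_eq0:
  assumes "is_bz t" "t 0 = 0" "t 1 = 0" "t 2 = 0" "t 3 = 0" "t 4 = 0" "t 5 = 0" "t 6 = 0" "t 7 = 0" "t 8 = 0"
  shows "t = (\<lambda>k. 0)"
proof
  fix k show "t k = 0"
  proof (cases "k < 9")
    case True then show ?thesis using nine[OF True] assms by auto
  next
    case False then show ?thesis using assms(1) unfolding is_bz_def by auto
  qed
qed

lemma L0:
  assumes "is_bz t" "\<forall>j\<in>{1,2,3}. side_weight t j = (0,0)"
  shows "t = (\<lambda>k. 0)"
proof -
  have "side_weight t 1 = (0,0)" "side_weight t 2 = (0,0)" "side_weight t 3 = (0,0)" using assms(2) by auto
  then show ?thesis by (intro tri_eq0[OF assms(1)]) (simp_all add: side_weight_def)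
qed

lemma L1:
  assumes "is_bz t" "j \<in> {1,2,3}" "side_weight t j \<noteq> (0,0)"
  shows "\<exists>j'\<in>{1,2,3}. j' \<noteq> j \<and> side_weight t j' \<noteq> (0,0)"
proof (rule ccontr)
  assume c: "\<not> ?thesis"
  have h: "t 1 + t 2 = t 6 + t 7" "t 2 + t 4 = t 3 + t 6" "t 4 + t 7 = t 1 + t 3"
    using assms(1) by (auto simp: is_bz_def)
  consider "j = 1" | "j = 2" | "j = 3" using assms(2) by auto
  then show False
  proof cases
    case 1
    with c have "side_weight t 2 = (0,0)" "side_weight t 3 = (0,0)" by auto
    then show False using assms(3) h 1 by (simp add: side_weight_def)
  next
    case 2
    with c have "side_weight t 1 = (0,0)" "side_weight t 3 = (0,0)" by auto
    then show False using assms(3) h 2 by (simp add: side_weight_def)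
  next
    case 3
    with c have "side_weight t 1 = (0,0)" "side_weight t 2 = (0,0)" by auto
    then show False using assms(3) h 3 by (simp add: side_weight_def)
  qed
qed

lemma gens_bz: "s \<in> Gens \<Longrightarrow> is_bz s"
  by (auto simp: Gens_def is_bz_def gen_def)

lemma gens_sum: "s \<in> Gens \<Longrightarrow> s 0 + s 1 + s 2 + s 3 + s 4 + s 5 + s 6 + s 7 + s 8 \<noteq> 0"
  unfolding Gens_def by (elim insertE emptyE; simp add: gen_def)

lemma gens_nz: "s \<in> Gens \<Longrightarrow> s \<noteq> (\<lambda>k. 0)"
  using gens_sum by fastforce

lemma gens_sw: "s \<in> Gens \<Longrightarrow> j \<in> {1,2,3} \<Longrightarrow> side_weight s j \<in> {(0,0),(1,0),(0,1)}"
  unfolding Gens_def by (elim insertE emptyE; simp add: gen_def side_weight_def; elim insertE emptyE; simp)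

lemma gen_le: "\<forall>k\<in>K. 1 \<le> t k \<Longrightarrow> \<forall>k. gen K k \<le> t k"
  by (auto simp: gen_def)
lemma Ldom:
  assumes bz: "is_bz t" and j: "j \<in> {1,2,3}" and x: "x \<in> {(1,0),(0,1)}"
    and le1: "fst x \<le> fst (side_weight t j)" and le2: "snd x \<le> snd (side_weight t j)"
  shows "\<exists>s\<in>Gens. (\<forall>k. s k \<le> t k) \<and> side_weight s j = x"
proof -
  have h: "t 1 + t 2 = t 6 + t 7" "t 2 + t 4 = t 3 + t 6" "t 4 + t 7 = t 1 + t 3"
    using bz by (auto simp: is_bz_def)
  have W: "\<And>K. gen K \<in> Gens \<Longrightarrow> \<forall>k\<in>K. 1 \<le> t k \<Longrightarrow> side_weight (gen K) j = x \<Longrightarrow> ?thesis"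
    using gen_le by blast
  consider "j = 1" "x = (1,0)" | "j = 1" "x = (0,1)" | "j = 2" "x = (1,0)" | "j = 2" "x = (0,1)"
    | "j = 3" "x = (1,0)" | "j = 3" "x = (0,1)" using j x by auto
  then show ?thesis
  proof cases
    case 1
    then have "1 \<le> t 0 + t 1" using le1 by (simp add: side_weight_def)
    then consider "1 \<le> t 0" | "1 \<le> t 1" "1 \<le> t 7" | "1 \<le> t 1" "1 \<le> t 4" "1 \<le> t 6" using h by linarith
    then show ?thesis
    proof cases
      case a: 1 show ?thesis by (rule W[of "{0}"]) (use a in \<open>simp_all add: Gens_def 1 side_weight_def gen_def\<close>)
    next
      case a: 2 show ?thesis by (rule W[of "{1,7}"]) (use a in \<open>simp_all add: Gens_def 1 side_weight_def gen_def\<close>)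
    next
      case a: 3 show ?thesis by (rule W[of "{1,4,6}"]) (use a in \<open>simp_all add: Gens_def 1 side_weight_def gen_def\<close>)
    qed
  next
    case 2
    then have "1 \<le> t 3 + t 5" using le2 by (simp add: side_weight_def)
    then consider "1 \<le> t 5" | "1 \<le> t 3" "1 \<le> t 4" | "1 \<le> t 3" "1 \<le> t 2" "1 \<le> t 7" using h by linarith
    then show ?thesis
    proof cases
      case a: 1 show ?thesis by (rule W[of "{5}"]) (use a in \<open>simp_all add: Gens_def 2 side_weight_def gen_def\<close>)
    next
      case a: 2 show ?thesis by (rule W[of "{3,4}"]) (use a in \<open>simp_all add: Gens_def 2 side_weight_def gen_def\<close>)
    next
      case a: 3 show ?thesis by (rule W[of "{2,3,7}"]) (use a in \<open>simp_all add: Gens_def 2 side_weight_def gen_def\<close>)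
    qed
  next
    case 3
    then have "1 \<le> t 5 + t 6" using le1 by (simp add: side_weight_def)
    then consider "1 \<le> t 5" | "1 \<le> t 6" "1 \<le> t 2" | "1 \<le> t 6" "1 \<le> t 1" "1 \<le> t 4" using h by linarith
    then show ?thesis
    proof cases
      case a: 1 show ?thesis by (rule W[of "{5}"]) (use a in \<open>simp_all add: Gens_def 3 side_weight_def gen_def\<close>)
    next
      case a: 2 show ?thesis by (rule W[of "{2,6}"]) (use a in \<open>simp_all add: Gens_def 3 side_weight_def gen_def\<close>)
    next
      case a: 3 show ?thesis by (rule W[of "{1,4,6}"]) (use a in \<open>simp_all add: Gens_def 3 side_weight_def gen_def\<close>)
    qed
  next
    case 4
    then have "1 \<le> t 7 + t 8" using le2 by (simp add: side_weight_def)
    then consider "1 \<le> t 8" | "1 \<le> t 7" "1 \<le> t 1" | "1 \<le> t 7" "1 \<le> t 2" "1 \<le> t 3" using h by linarith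
    then show ?thesis
    proof cases
      case a: 1 show ?thesis by (rule W[of "{8}"]) (use a in \<open>simp_all add: Gens_def 4 side_weight_def gen_def\<close>)
    next
      case a: 2 show ?thesis by (rule W[of "{1,7}"]) (use a in \<open>simp_all add: Gens_def 4 side_weight_def gen_def\<close>)
    next
      case a: 3 show ?thesis by (rule W[of "{2,3,7}"]) (use a in \<open>simp_all add: Gens_def 4 side_weight_def gen_def\<close>)
    qed
  next
    case 5
    then have "1 \<le> t 8 + t 4" using le1 by (simp add: side_weight_def)
    then consider "1 \<le> t 8" | "1 \<le> t 4" "1 \<le> t 3" | "1 \<le> t 4" "1 \<le> t 1" "1 \<le> t 6" using h by linarith
    then show ?thesis
    proof cases
      case a: 1 show ?thesis by (rule W[of "{8}"]) (use a in \<open>simp_all add: Gens_def 5 side_weight_def gen_def\<close>)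
    next
      case a: 2 show ?thesis by (rule W[of "{3,4}"]) (use a in \<open>simp_all add: Gens_def 5 side_weight_def gen_def\<close>)
    next
      case a: 3 show ?thesis by (rule W[of "{1,4,6}"]) (use a in \<open>simp_all add: Gens_def 5 side_weight_def gen_def\<close>)
    qed
  next
    case 6
    then have "1 \<le> t 2 + t 0" using le2 by (simp add: side_weight_def)
    then consider "1 \<le> t 0" | "1 \<le> t 2" "1 \<le> t 6" | "1 \<le> t 2" "1 \<le> t 3" "1 \<le> t 7" using h by linarith
    then show ?thesis
    proof cases
      case a: 1 show ?thesis by (rule W[of "{0}"]) (use a in \<open>simp_all add: Gens_def 6 side_weight_def gen_def\<close>)
    next
      case a: 2 show ?thesis by (rule W[of "{2,6}"]) (use a in \<open>simp_all add: Gens_def 6 side_weight_def gen_def\<close>)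
    next
      case a: 3 show ?thesis by (rule W[of "{2,3,7}"]) (use a in \<open>simp_all add: Gens_def 6 side_weight_def gen_def\<close>)
    qed
  qed
qed


lemma L2:
  assumes J: "J \<subseteq> {1,2,3}" "2 \<le> card J" and j: "j \<in> J" and x: "x \<in> {(1,0),(0,1)}"
  shows "\<exists>s\<in>Gens. (\<forall>j'\<in>{1,2,3}. side_weight s j' \<noteq> (0,0) \<longleftrightarrow> j' \<in> J) \<and> side_weight s j = x"
proof -
  have Jm: "J \<in> {{1,2},{1,3},{2,3},{1,2,3}}"
  proof -
    have "J \<in> Pow {1,2,3}" using J by auto
    moreover have eq: "Pow {1::nat,2,3} = {{},{1},{2},{3},{1,2},{1,3},{2,3},{1,2,3}}"
      by (auto simp: Pow_insert)
    ultimately have "J \<in> {{},{1},{2},{3},{1,2},{1,3},{2,3},{1,2,3}}" by (simp only:)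
    then show ?thesis using J(2) by (elim insertE emptyE; simp)
  qed
  have xx: "x = (1,0) \<or> x = (0,1)" using x by simp
  show ?thesis using Jm j xx
    by (elim insertE emptyE; simp; elim disjE; simp add: Gens_def side_weight_def gen_def)
qed


lemma Gtab:
  assumes "s \<in> Gens"
  shows "(s = gen {0} \<and> side_weight s 1 = (1,0) \<and> side_weight s 2 = (0,0) \<and> side_weight s 3 = (0,1))
       \<or> (s = gen {3,4} \<and> side_weight s 1 = (0,1) \<and> side_weight s 2 = (0,0) \<and> side_weight s 3 = (1,0))
       \<or> (s = gen {5} \<and> side_weight s 1 = (0,1) \<and> side_weight s 2 = (1,0) \<and> side_weight s 3 = (0,0))
       \<or> (s = gen {1,7} \<and> side_weight s 1 = (1,0) \<and> side_weight s 2 = (0,1) \<and> side_weight s 3 = (0,0))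
       \<or> (s = gen {8} \<and> side_weight s 1 = (0,0) \<and> side_weight s 2 = (0,1) \<and> side_weight s 3 = (1,0))
       \<or> (s = gen {2,6} \<and> side_weight s 1 = (0,0) \<and> side_weight s 2 = (1,0) \<and> side_weight s 3 = (0,1))
       \<or> (s = gen {1,4,6} \<and> side_weight s 1 = (1,0) \<and> side_weight s 2 = (1,0) \<and> side_weight s 3 = (1,0))
       \<or> (s = gen {2,3,7} \<and> side_weight s 1 = (0,1) \<and> side_weight s 2 = (0,1) \<and> side_weight s 3 = (0,1))"
  using assms unfolding Gens_def by (elim insertE emptyE; simp add: side_weight_def gen_def)

definition decode :: "(nat \<times> nat) \<times> (nat \<times> nat) \<times> (nat \<times> nat) \<Rightarrow> nat \<Rightarrow> nat" where
  "decode c = (if c = ((1,0),(0,0),(0,1)) then gen {0}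
     else if c = ((0,1),(0,0),(1,0)) then gen {3,4}
     else if c = ((0,1),(1,0),(0,0)) then gen {5}
     else if c = ((1,0),(0,1),(0,0)) then gen {1,7}
     else if c = ((0,0),(0,1),(1,0)) then gen {8}
     else if c = ((0,0),(1,0),(0,1)) then gen {2,6}
     else if c = ((1,0),(1,0),(1,0)) then gen {1,4,6}
     else gen {2,3,7})"

lemma decode_gen: "s \<in> Gens \<Longrightarrow> decode (side_weight s 1, side_weight s 2, side_weight s 3) = s"
  unfolding Gens_def by (elim insertE emptyE; simp add: decode_def side_weight_def gen_def)

lemma Ginj:
  assumes "s1 \<in> Gens" "s2 \<in> Gens" "side_weight s1 1 = side_weight s2 1"
    "side_weight s1 2 = side_weight s2 2" "side_weight s1 3 = side_weight s2 3"
  shows "s1 = s2"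
  using decode_gen[OF assms(1)] decode_gen[OF assms(2)] assms(3-5) by metis
lemma Gw:
  assumes "s \<in> Gens"
  shows "(side_weight s 1, side_weight s 2, side_weight s 3) \<in>
    {((1,0),(0,0),(0,1)), ((0,1),(0,0),(1,0)), ((0,1),(1,0),(0,0)), ((1,0),(0,1),(0,0)),
     ((0,0),(0,1),(1,0)), ((0,0),(1,0),(0,1)), ((1,0),(1,0),(1,0)), ((0,1),(0,1),(0,1))}"
  using assms unfolding Gens_def by (elim insertE emptyE; simp add: side_weight_def gen_def)


definition T8 :: "((nat \<times> nat) \<times> (nat \<times> nat) \<times> (nat \<times> nat)) set" where
  "T8 = {((1,0),(0,0),(0,1)), ((0,1),(0,0),(1,0)), ((0,1),(1,0),(0,0)), ((1,0),(0,1),(0,0)),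
     ((0,0),(0,1),(1,0)), ((0,0),(1,0),(0,1)), ((1,0),(1,0),(1,0)), ((0,1),(0,1),(0,1))}"

lemma T8_eq1: "(a1,a2,a3) \<in> T8 \<Longrightarrow> (b1,b2,b3) \<in> T8 \<Longrightarrow> (a1 = (0,0)) = (b1 = (0,0)) \<Longrightarrow>
   (a2 = (0,0)) = (b2 = (0,0)) \<Longrightarrow> (a3 = (0,0)) = (b3 = (0,0)) \<Longrightarrow>
   a1 = b1 \<Longrightarrow> a1 \<noteq> (0,0) \<Longrightarrow> a1 = b1 \<and> a2 = b2 \<and> a3 = b3"
  unfolding T8_def apply (elim insertE emptyE) apply simp_all done

lemma T8_eq2: "(a1,a2,a3) \<in> T8 \<Longrightarrow> (b1,b2,b3) \<in> T8 \<Longrightarrow> (a1 = (0,0)) = (b1 = (0,0)) \<Longrightarrow>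
   (a2 = (0,0)) = (b2 = (0,0)) \<Longrightarrow> (a3 = (0,0)) = (b3 = (0,0)) \<Longrightarrow>
   a2 = b2 \<Longrightarrow> a2 \<noteq> (0,0) \<Longrightarrow> a1 = b1 \<and> a2 = b2 \<and> a3 = b3"
  unfolding T8_def apply (elim insertE emptyE) apply simp_all done

lemma T8_eq3: "(a1,a2,a3) \<in> T8 \<Longrightarrow> (b1,b2,b3) \<in> T8 \<Longrightarrow> (a1 = (0,0)) = (b1 = (0,0)) \<Longrightarrow>
   (a2 = (0,0)) = (b2 = (0,0)) \<Longrightarrow> (a3 = (0,0)) = (b3 = (0,0)) \<Longrightarrow>
   a3 = b3 \<Longrightarrow> a3 \<noteq> (0,0) \<Longrightarrow> a1 = b1 \<and> a2 = b2 \<and> a3 = b3"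
  unfolding T8_def apply (elim insertE emptyE) apply simp_all done

lemma Gw': "s \<in> Gens \<Longrightarrow> (side_weight s 1, side_weight s 2, side_weight s 3) \<in> T8"
  using Gw unfolding T8_def by blast

lemma L3:
  assumes "s1 \<in> Gens" "s2 \<in> Gens"
    and "\<forall>j\<in>{1,2,3}. (side_weight s1 j = (0,0)) = (side_weight s2 j = (0,0))"
    and "j \<in> {1,2,3}" "side_weight s1 j = side_weight s2 j" "side_weight s1 j \<noteq> (0,0)"
  shows "s1 = s2"
proof -
  have a: "(side_weight s1 1 = (0,0)) = (side_weight s2 1 = (0,0))"
    "(side_weight s1 2 = (0,0)) = (side_weight s2 2 = (0,0))"
    "(side_weight s1 3 = (0,0)) = (side_weight s2 3 = (0,0))"
    using assms(3)[rule_format, of 1] assms(3)[rule_format, of 2] assms(3)[rule_format, of 3] by simp_all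
  consider "j = 1" | "j = 2" | "j = 3" using assms(4) by auto
  then show ?thesis
  proof cases
    case 1
    have "side_weight s1 1 = side_weight s2 1" "side_weight s1 1 \<noteq> (0,0)" using assms(5,6) 1 by simp_all
    from T8_eq1[OF Gw'[OF assms(1)] Gw'[OF assms(2)] a this] show ?thesis
      by (intro Ginj[OF assms(1,2)]) simp_all
  next
    case 2
    have "side_weight s1 2 = side_weight s2 2" "side_weight s1 2 \<noteq> (0,0)" using assms(5,6) 2 by simp_all
    from T8_eq2[OF Gw'[OF assms(1)] Gw'[OF assms(2)] a this] show ?thesis
      by (intro Ginj[OF assms(1,2)]) simp_all
  next
    case 3
    have "side_weight s1 3 = side_weight s2 3" "side_weight s1 3 \<noteq> (0,0)" using assms(5,6) 3 by simp_all
    from T8_eq3[OF Gw'[OF assms(1)] Gw'[OF assms(2)] a this] show ?thesis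
      by (intro Ginj[OF assms(1,2)]) simp_all
  qed
qed

lemma L5:
  assumes "s \<in> Gens" "is_bz t1" "is_bz t2" "\<forall>k. t1 k + t2 k = s k"
  shows "t1 = (\<lambda>k. 0) \<or> t2 = (\<lambda>k. 0)"
proof -
  have e: "\<And>k. t1 k + t2 k = s k" using assms(4) by auto
  have h1: "t1 1 + t1 2 = t1 6 + t1 7" "t1 2 + t1 4 = t1 3 + t1 6" "t1 4 + t1 7 = t1 1 + t1 3"
    using assms(2) by (auto simp: is_bz_def)
  have h2: "t2 1 + t2 2 = t2 6 + t2 7" "t2 2 + t2 4 = t2 3 + t2 6" "t2 4 + t2 7 = t2 1 + t2 3"
    using assms(3) by (auto simp: is_bz_def)
  note E = e[of 0] e[of 1] e[of 2] e[of 3] e[of 4] e[of 5] e[of 6] e[of 7] e[of 8]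
  let ?Z1 = "t1 0 = 0 \<and> t1 1 = 0 \<and> t1 2 = 0 \<and> t1 3 = 0 \<and> t1 4 = 0 \<and> t1 5 = 0 \<and> t1 6 = 0 \<and> t1 7 = 0 \<and> t1 8 = 0"
  let ?Z2 = "t2 0 = 0 \<and> t2 1 = 0 \<and> t2 2 = 0 \<and> t2 3 = 0 \<and> t2 4 = 0 \<and> t2 5 = 0 \<and> t2 6 = 0 \<and> t2 7 = 0 \<and> t2 8 = 0"
  have W: "\<And>k0. (t1 k0 = 0 \<Longrightarrow> ?Z1) \<Longrightarrow> (t1 k0 \<noteq> 0 \<Longrightarrow> ?Z2) \<Longrightarrow> ?Z1 \<or> ?Z2" by blast
  have "?Z1 \<or> ?Z2"
    using assms(1) unfolding Gens_def
  proof (elim insertE emptyE)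
    assume "s = gen {0}" then have F: "t1 0 + t2 0 = 1" "t1 1 + t2 1 = 0" "t1 2 + t2 2 = 0" "t1 3 + t2 3 = 0" "t1 4 + t2 4 = 0" "t1 5 + t2 5 = 0" "t1 6 + t2 6 = 0" "t1 7 + t2 7 = 0" "t1 8 + t2 8 = 0"
      using E by (simp_all add: gen_def)
    show ?thesis by (rule W[of 0]) (use F h1 h2 in linarith)+
  next
    assume "s = gen {5}" then have F: "t1 0 + t2 0 = 0" "t1 1 + t2 1 = 0" "t1 2 + t2 2 = 0" "t1 3 + t2 3 = 0" "t1 4 + t2 4 = 0" "t1 5 + t2 5 = 1" "t1 6 + t2 6 = 0" "t1 7 + t2 7 = 0" "t1 8 + t2 8 = 0"
      using E by (simp_all add: gen_def)
    show ?thesis by (rule W[of 5]) (use F h1 h2 in linarith)+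
  next
    assume "s = gen {8}" then have F: "t1 0 + t2 0 = 0" "t1 1 + t2 1 = 0" "t1 2 + t2 2 = 0" "t1 3 + t2 3 = 0" "t1 4 + t2 4 = 0" "t1 5 + t2 5 = 0" "t1 6 + t2 6 = 0" "t1 7 + t2 7 = 0" "t1 8 + t2 8 = 1"
      using E by (simp_all add: gen_def)
    show ?thesis by (rule W[of 8]) (use F h1 h2 in linarith)+
  next
    assume "s = gen {3,4}" then have F: "t1 0 + t2 0 = 0" "t1 1 + t2 1 = 0" "t1 2 + t2 2 = 0" "t1 3 + t2 3 = 1" "t1 4 + t2 4 = 1" "t1 5 + t2 5 = 0" "t1 6 + t2 6 = 0" "t1 7 + t2 7 = 0" "t1 8 + t2 8 = 0"
      using E by (simp_all add: gen_def)
    show ?thesis by (rule W[of 3]) (use F h1 h2 in linarith)+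
  next
    assume "s = gen {2,6}" then have F: "t1 0 + t2 0 = 0" "t1 1 + t2 1 = 0" "t1 2 + t2 2 = 1" "t1 3 + t2 3 = 0" "t1 4 + t2 4 = 0" "t1 5 + t2 5 = 0" "t1 6 + t2 6 = 1" "t1 7 + t2 7 = 0" "t1 8 + t2 8 = 0"
      using E by (simp_all add: gen_def)
    show ?thesis by (rule W[of 2]) (use F h1 h2 in linarith)+
  next
    assume "s = gen {1,7}" then have F: "t1 0 + t2 0 = 0" "t1 1 + t2 1 = 1" "t1 2 + t2 2 = 0" "t1 3 + t2 3 = 0" "t1 4 + t2 4 = 0" "t1 5 + t2 5 = 0" "t1 6 + t2 6 = 0" "t1 7 + t2 7 = 1" "t1 8 + t2 8 = 0"
      using E by (simp_all add: gen_def)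
    show ?thesis by (rule W[of 1]) (use F h1 h2 in linarith)+
  next
    assume "s = gen {2,3,7}" then have F: "t1 0 + t2 0 = 0" "t1 1 + t2 1 = 0" "t1 2 + t2 2 = 1" "t1 3 + t2 3 = 1" "t1 4 + t2 4 = 0" "t1 5 + t2 5 = 0" "t1 6 + t2 6 = 0" "t1 7 + t2 7 = 1" "t1 8 + t2 8 = 0"
      using E by (simp_all add: gen_def)
    show ?thesis by (rule W[of 2]) (use F h1 h2 in linarith)+
  next
    assume "s = gen {1,4,6}" then have F: "t1 0 + t2 0 = 0" "t1 1 + t2 1 = 1" "t1 2 + t2 2 = 0" "t1 3 + t2 3 = 0" "t1 4 + t2 4 = 1" "t1 5 + t2 5 = 0" "t1 6 + t2 6 = 1" "t1 7 + t2 7 = 0" "t1 8 + t2 8 = 0"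
      using E by (simp_all add: gen_def)
    show ?thesis by (rule W[of 1]) (use F h1 h2 in linarith)+
  qed
  then show ?thesis using tri_eq0[OF assms(2)] tri_eq0[OF assms(3)] by blast
qed

lemma rt_lift:
  assumes "R\<^sup>*\<^sup>* u v" "\<And>x y. R x y \<Longrightarrow> S\<^sup>*\<^sup>* x y"
  shows "S\<^sup>*\<^sup>* u v"
  using assms(1)
proof (induction rule: rtranclp_induct)
  case base then show ?case by simp
next
  case (step y z) then show ?case using assms(2) rtranclp_trans by metis
qed

lemma adj_sym: "adj F x y = adj F y x"
  unfolding adj_def by (simp add: insert_commute)

lemma rt_sym: "(adj F)\<^sup>*\<^sup>* x y \<Longrightarrow> (adj F)\<^sup>*\<^sup>* y x"
proof (induction rule: rtranclp_induct)
  case base then show ?case by simp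
next
  case (step y z)
  then have "adj F z y" using adj_sym by metis
  then show ?case using step(3) converse_rtranclp_into_rtranclp by metis
qed

lemma adj_mono: "adj F x y \<Longrightarrow> F \<subseteq> G \<Longrightarrow> adj G x y"
  unfolding adj_def by auto

lemma rt_mono: "(adj F)\<^sup>*\<^sup>* x y \<Longrightarrow> F \<subseteq> G \<Longrightarrow> (adj G)\<^sup>*\<^sup>* x y"
  by (erule rt_lift) (metis adj_mono r_into_rtranclp)

locale ctx0 =
  fixes V :: "'v set" and E :: "'v set set" and sd :: "'v \<Rightarrow> nat \<Rightarrow> 'v set"
  assumes tt: "trivalent_tree V E" and sl: "side_labelling V E sd"
begin

abbreviation "Tri \<equiv> trinodes V E"

lemma finV: "finite V" using tt unfolding trivalent_tree_def is_tree_def by auto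

lemma conn: "graph_connected V E" using tt unfolding trivalent_tree_def is_tree_def by auto

lemma acyc: "e \<in> E \<Longrightarrow> \<not> graph_connected V (E - {e})"
  using tt unfolding trivalent_tree_def is_tree_def by auto

lemma degs: "v \<in> V \<Longrightarrow> deg E v = 1 \<or> deg E v = 3"
  using tt unfolding trivalent_tree_def by auto

lemma E2: "e \<in> E \<Longrightarrow> \<exists>u v. e = {u,v} \<and> u \<in> V \<and> v \<in> V \<and> u \<noteq> v"
proof -
  assume e: "e \<in> E"
  have "E \<subseteq> {{u, v} | u v. u \<in> V \<and> v \<in> V \<and> u \<noteq> v}"
    using tt by (simp add: trivalent_tree_def is_tree_def simple_graph_def)
  then have "e \<in> {{u, v} | u v. u \<in> V \<and> v \<in> V \<and> u \<noteq> v}" using e by (rule subsetD)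
  then show ?thesis by (simp only: mem_Collect_eq)
qed

lemma E_sub: "e \<in> E \<Longrightarrow> e \<subseteq> V"
proof -
  assume "e \<in> E" then obtain u v where "e = {u,v}" "u \<in> V" "v \<in> V" using E2 by blast
  then show ?thesis by simp
qed

lemma finE: "finite E"
proof -
  have "E \<subseteq> Pow V" using E_sub by blast
  then show ?thesis using finV finite_subset by blast
qed

lemma edge_eq: "e \<in> E \<Longrightarrow> x \<in> e \<Longrightarrow> y \<in> e \<Longrightarrow> x \<noteq> y \<Longrightarrow> e = {x,y}"
proof -
  assume a: "e \<in> E" "x \<in> e" "y \<in> e" "x \<noteq> y"
  then obtain u v where "e = {u,v}" using E2 by blast
  then show ?thesis using a by auto
qed

lemma no_loop: "{x} \<notin> E"
proof
  assume "{x} \<in> E"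
  then obtain u v where "{x} = {u,v}" "u \<noteq> v" using E2 by blast
  then show False by (metis insertCI singletonD)
qed

lemma Tri_V: "v \<in> Tri \<Longrightarrow> v \<in> V" unfolding trinodes_def by auto

lemma finTri: "finite Tri" using finV unfolding trinodes_def by auto

lemma deg_fin: "finite {e \<in> E. v \<in> e}" using finE by auto

lemma leaf_unique:
  assumes "x \<in> V" "x \<notin> Tri" "e \<in> E" "e' \<in> E" "x \<in> e" "x \<in> e'"
  shows "e = e'"
proof -
  have "deg E x = 1" using degs[OF assms(1)] assms(1,2) unfolding trinodes_def by auto
  then obtain a where eq: "{e \<in> E. x \<in> e} = {a}" unfolding deg_def using card_1_singletonE by blast
  have "e \<in> {e \<in> E. x \<in> e}" "e' \<in> {e \<in> E. x \<in> e}" using assms by simp_all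
  then show ?thesis unfolding eq by simp
qed

lemma not_tri_leaf: "x \<in> V \<Longrightarrow> x \<notin> Tri \<Longrightarrow> x \<in> leaves V E"
proof -
  assume a: "x \<in> V" "x \<notin> Tri"
  then have "deg E x = 1" using degs[OF a(1)] unfolding trinodes_def by auto
  then show ?thesis using a(1) unfolding leaves_def by simp
qed

lemma sd_bij: "v \<in> Tri \<Longrightarrow> bij_betw (sd v) {1,2,3} {e \<in> E. v \<in> e}"
  using sl unfolding side_labelling_def by (rule bspec)

lemma sd_E: "v \<in> Tri \<Longrightarrow> j \<in> {1,2,3} \<Longrightarrow> sd v j \<in> E \<and> v \<in> sd v j"
proof -
  assume a: "v \<in> Tri" "j \<in> {1,2,3}"
  have "sd v j \<in> {e \<in> E. v \<in> e}" using bij_betwE[OF sd_bij[OF a(1)]] a(2) by blast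
  then show ?thesis by simp
qed

lemma sd_surj: "v \<in> Tri \<Longrightarrow> e \<in> E \<Longrightarrow> v \<in> e \<Longrightarrow> \<exists>j\<in>{1,2,3}. sd v j = e"
proof -
  assume a: "v \<in> Tri" "e \<in> E" "v \<in> e"
  have "e \<in> sd v ` {1,2,3}" using sd_bij[OF a(1)] a(2,3) unfolding bij_betw_def by simp
  then show ?thesis by blast
qed

lemma sd_inj: "v \<in> Tri \<Longrightarrow> j \<in> {1,2,3} \<Longrightarrow> j' \<in> {1,2,3} \<Longrightarrow> sd v j = sd v j' \<Longrightarrow> j = j'"
proof -
  assume a: "v \<in> Tri" "j \<in> {1,2,3}" "j' \<in> {1,2,3}" "sd v j = sd v j'"
  have i: "inj_on (sd v) {1,2,3}" by (rule bij_betw_imp_inj_on[OF sd_bij[OF a(1)]])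
  show ?thesis using inj_onD[OF i a(4) a(2) a(3)] .
qed

lemma T1:
  assumes e: "{a,b} \<in> E" and p: "(adj (E - {{a,b}}))\<^sup>*\<^sup>* a b"
  shows False
proof -
  have "graph_connected V (E - {{a,b}})"
    unfolding graph_connected_def
  proof (intro ballI)
    fix u v assume "u \<in> V" "v \<in> V"
    then have "(adj E)\<^sup>*\<^sup>* u v" using conn unfolding graph_connected_def by auto
    then show "(adj (E - {{a,b}}))\<^sup>*\<^sup>* u v"
    proof (rule rt_lift)
      fix x y assume xy: "adj E x y"
      show "(adj (E - {{a,b}}))\<^sup>*\<^sup>* x y"
      proof (cases "{x,y} = {a,b}")
        case True
        then have "(x = a \<and> y = b) \<or> (x = b \<and> y = a)" by (simp add: doubleton_eq_iff)
        then show ?thesis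
        proof (elim disjE conjE)
          assume "x = a" "y = b" then show ?thesis using p by simp
        next
          assume "x = b" "y = a" then show ?thesis using rt_sym[OF p] by simp
        qed
      next
        case False
        then have "adj (E - {{a,b}}) x y" using xy unfolding adj_def by simp
        then show ?thesis by simp
      qed
    qed
  qed
  then show False using acyc[OF e] by simp
qed

end

locale ctx = ctx0 V E sd for V :: "'v set" and E :: "'v set set" and sd :: "'v \<Rightarrow> nat \<Rightarrow> 'v set" +
  assumes tri_edge: "\<forall>e\<in>E. \<exists>v\<in>e. v \<in> trinodes V E"

lemma sw_Z: "side_weight (\<lambda>k. 0) j = (0,0)" by (simp add: side_weight_def)
lemma bz_Z: "is_bz (\<lambda>k. 0)" by (simp add: is_bz_def)
lemma swap_00: "prod.swap x = (0,0) \<longleftrightarrow> x = (0,0)" by (cases x) auto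

context ctx begin

lemma Q_off: "inQ V E sd w \<Longrightarrow> v \<notin> Tri \<Longrightarrow> w v = (\<lambda>k. 0)"
proof -
  assume "inQ V E sd w" "v \<notin> Tri"
  then have "\<forall>k. w v k = 0" unfolding inQ_def by blast
  then show ?thesis by (simp add: fun_eq_iff)
qed

lemma Q_bz: "inQ V E sd w \<Longrightarrow> v \<in> Tri \<Longrightarrow> is_bz (w v)"
  unfolding inQ_def by blast

lemma Q_glue: "inQ V E sd w \<Longrightarrow> v \<in> Tri \<Longrightarrow> v' \<in> Tri \<Longrightarrow> v \<noteq> v' \<Longrightarrow> j \<in> {1,2,3} \<Longrightarrow> j' \<in> {1,2,3}
   \<Longrightarrow> sd v j = sd v' j' \<Longrightarrow> side_weight (w v) j = prod.swap (side_weight (w v') j')"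
  unfolding inQ_def by blast

lemma glue_nz: "inQ V E sd w \<Longrightarrow> v \<in> Tri \<Longrightarrow> v' \<in> Tri \<Longrightarrow> v \<noteq> v' \<Longrightarrow> j \<in> {1,2,3} \<Longrightarrow> j' \<in> {1,2,3}
   \<Longrightarrow> sd v j = sd v' j' \<Longrightarrow> side_weight (w v) j \<noteq> (0,0) \<Longrightarrow> side_weight (w v') j' \<noteq> (0,0)"
proof -
  assume a: "inQ V E sd w" "v \<in> Tri" "v' \<in> Tri" "v \<noteq> v'" "j \<in> {1,2,3}" "j' \<in> {1,2,3}"
    "sd v j = sd v' j'" "side_weight (w v) j \<noteq> (0,0)"
  have "side_weight (w v) j = prod.swap (side_weight (w v') j')" by (rule Q_glue[OF a(1-7)])
  then show ?thesis using a(8) by (simp add: swap_00)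
qed

lemma supp_E: "supp V E sd w \<subseteq> E" unfolding supp_def by blast

lemma SUPPX:
  assumes Q: "inQ V E sd w" and x: "x \<in> Tri"
  shows "(e \<in> supp V E sd w \<and> x \<in> e) \<longleftrightarrow> (\<exists>j\<in>{1,2,3}. e = sd x j \<and> side_weight (w x) j \<noteq> (0,0))"
proof
  assume "\<exists>j\<in>{1,2,3}. e = sd x j \<and> side_weight (w x) j \<noteq> (0,0)"
  then obtain j where j: "j \<in> {1,2,3}" "e = sd x j" "side_weight (w x) j \<noteq> (0,0)" by blast
  have "e \<in> E" "x \<in> e" using sd_E[OF x j(1)] j(2) by auto
  then show "e \<in> supp V E sd w \<and> x \<in> e" unfolding supp_def using x j by blast
next
  assume a: "e \<in> supp V E sd w \<and> x \<in> e"
  then obtain v j where v: "v \<in> Tri" "j \<in> {1,2,3}" "sd v j = e" "side_weight (w v) j \<noteq> (0,0)" "e \<in> E"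
    unfolding supp_def by blast
  show "\<exists>j\<in>{1,2,3}. e = sd x j \<and> side_weight (w x) j \<noteq> (0,0)"
  proof (cases "v = x")
    case True then show ?thesis using v by blast
  next
    case False
    obtain j' where j': "j' \<in> {1,2,3}" "sd x j' = e" using sd_surj[OF x v(5)] a by blast
    have "side_weight (w x) j' \<noteq> (0,0)"
      using glue_nz[OF Q v(1) x False v(2) j'(1)] v(3,4) j'(2) by simp
    then show ?thesis using j' by blast
  qed
qed

lemma nz_side: "inQ V E sd w \<Longrightarrow> v \<in> Tri \<Longrightarrow> w v \<noteq> (\<lambda>k. 0) \<Longrightarrow> \<exists>j\<in>{1,2,3}. side_weight (w v) j \<noteq> (0,0)"
  using L0 Q_bz by blast

lemma edges_at:
  assumes v: "v \<in> Tri" and F: "F \<subseteq> E"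
  shows "{e \<in> F. v \<in> e} = sd v ` {j \<in> {1,2,3}. sd v j \<in> F}"
proof
  show "{e \<in> F. v \<in> e} \<subseteq> sd v ` {j \<in> {1,2,3}. sd v j \<in> F}"
  proof
    fix e assume "e \<in> {e \<in> F. v \<in> e}"
    then have "e \<in> F" "v \<in> e" "e \<in> E" using F by auto
    then obtain j where "j \<in> {1,2,3}" "sd v j = e" using sd_surj[OF v] by blast
    then show "e \<in> sd v ` {j \<in> {1,2,3}. sd v j \<in> F}" using \<open>e \<in> F\<close> by blast
  qed
next
  show "sd v ` {j \<in> {1,2,3}. sd v j \<in> F} \<subseteq> {e \<in> F. v \<in> e}"
    using sd_E[OF v] by blast
qed

lemma deg_sides:
  assumes v: "v \<in> Tri" and F: "F \<subseteq> E"
  shows "deg F v = card {j \<in> {1,2,3}. sd v j \<in> F}"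
proof -
  have "inj_on (sd v) {j \<in> {1,2,3}. sd v j \<in> F}"
    using bij_betw_imp_inj_on[OF sd_bij[OF v]] by (rule inj_on_subset) blast
  then show ?thesis unfolding deg_def edges_at[OF v F] by (rule card_image)
qed

lemma supp_sides:
  assumes Q: "inQ V E sd w" and x: "x \<in> Tri"
  shows "{j \<in> {1,2,3}. sd x j \<in> supp V E sd w} = {j \<in> {1,2,3}. side_weight (w x) j \<noteq> (0,0)}"
proof -
  have "\<And>j. j \<in> {1,2,3} \<Longrightarrow> sd x j \<in> supp V E sd w \<longleftrightarrow> side_weight (w x) j \<noteq> (0,0)"
  proof -
    fix j :: nat assume j: "j \<in> {1,2,3}"
    have "sd x j \<in> supp V E sd w \<longleftrightarrow> (\<exists>j'\<in>{1,2,3}. sd x j = sd x j' \<and> side_weight (w x) j' \<noteq> (0,0))"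
      using SUPPX[OF Q x, of "sd x j"] sd_E[OF x j] by simp
    also have "\<dots> \<longleftrightarrow> side_weight (w x) j \<noteq> (0,0)"
    proof
      assume "\<exists>j'\<in>{1,2,3}. sd x j = sd x j' \<and> side_weight (w x) j' \<noteq> (0,0)"
      then obtain j' where "j' \<in> {1,2,3}" "sd x j = sd x j'" "side_weight (w x) j' \<noteq> (0,0)" by blast
      moreover have "j = j'" by (rule sd_inj[OF x j]) fact+
      ultimately show "side_weight (w x) j \<noteq> (0,0)" by simp
    next
      assume "side_weight (w x) j \<noteq> (0,0)"
      then show "\<exists>j'\<in>{1,2,3}. sd x j = sd x j' \<and> side_weight (w x) j' \<noteq> (0,0)" using j by blast
    qed
    finally show "sd x j \<in> supp V E sd w \<longleftrightarrow> side_weight (w x) j \<noteq> (0,0)" .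
  qed
  then show ?thesis by (intro Collect_cong) blast
qed

lemma card_ne1:
  assumes bz: "is_bz t"
  shows "card {j \<in> {1::nat,2,3}. side_weight t j \<noteq> (0,0)} \<noteq> 1"
proof
  assume "card {j \<in> {1::nat,2,3}. side_weight t j \<noteq> (0,0)} = 1"
  then obtain j where eq: "{j \<in> {1::nat,2,3}. side_weight t j \<noteq> (0,0)} = {j}" using card_1_singletonE by blast
  have "j \<in> {j \<in> {1::nat,2,3}. side_weight t j \<noteq> (0,0)}" unfolding eq by simp
  then have j: "j \<in> {1,2,3}" "side_weight t j \<noteq> (0,0)" by simp_all
  obtain j' where "j' \<in> {1,2,3}" "j' \<noteq> j" "side_weight t j' \<noteq> (0,0)" using L1[OF bz j] by blast
  then have "j' \<in> {j \<in> {1::nat,2,3}. side_weight t j \<noteq> (0,0)}" by simp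
  then show False unfolding eq using \<open>j' \<noteq> j\<close> by simp
qed

lemma supp_proper:
  assumes Q: "inQ V E sd w" and nz: "w \<noteq> zeroQ"
    and c: "graph_connected (\<Union>(supp V E sd w)) (supp V E sd w)"
  shows "proper_subtree V E (supp V E sd w)"
  unfolding proper_subtree_def
proof (intro conjI ballI impI)
  show "supp V E sd w \<subseteq> E" by (rule supp_E)
  show "graph_connected (\<Union>(supp V E sd w)) (supp V E sd w)" by (rule c)
  have "\<exists>v. w v \<noteq> (\<lambda>k. 0)"
  proof (rule ccontr)
    assume "\<not> (\<exists>v. w v \<noteq> (\<lambda>k. 0))"
    then have "w = zeroQ" unfolding zeroQ_def by (simp add: fun_eq_iff)
    then show False using nz by simp
  qed
  then obtain v where v: "w v \<noteq> (\<lambda>k. 0)" by blast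
  then have vT: "v \<in> Tri" using Q_off[OF Q] by blast
  obtain j where "j \<in> {1,2,3}" "side_weight (w v) j \<noteq> (0,0)" using nz_side[OF Q vT v] by blast
  then have "sd v j \<in> supp V E sd w" using SUPPX[OF Q vT] by blast
  then show "supp V E sd w \<noteq> {}" by blast
next
  fix x assume x: "x \<in> \<Union>(supp V E sd w)" and d: "deg (supp V E sd w) x = 1"
  have xV: "x \<in> V" using x supp_E E_sub by blast
  show "x \<in> leaves V E"
  proof (cases "x \<in> Tri")
    case True
    have "deg (supp V E sd w) x = card {j \<in> {1,2,3}. side_weight (w x) j \<noteq> (0,0)}"
      using deg_sides[OF True supp_E] supp_sides[OF Q True] by simp
    then show ?thesis using d card_ne1[OF Q_bz[OF Q True]] by simp
  next
    case False then show ?thesis using not_tri_leaf xV by blast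
  qed
qed

end

lemma rt_sym_gen:
  assumes sym: "\<And>x y. R x y \<Longrightarrow> R y x" and r: "R\<^sup>*\<^sup>* a b"
  shows "R\<^sup>*\<^sup>* b a"
  using r
proof (induction rule: rtranclp_induct)
  case base then show ?case by simp
next
  case (step y z)
  then show ?case using sym converse_rtranclp_into_rtranclp by metis
qed

context ctx begin

lemma edge_ne: "{y,z} \<in> E \<Longrightarrow> y \<noteq> z"
proof
  assume "{y,z} \<in> E" "y = z"
  then have "{y} \<in> E" by simp
  then show False using no_loop by blast
qed

lemma propag:
  assumes F: "F \<subseteq> E" and c: "graph_connected (\<Union>F) F" and v0: "v0 \<in> Tri" "v0 \<in> \<Union>F" and P0: "P v0"
    and st: "\<And>v v'. v \<in> Tri \<Longrightarrow> v' \<in> Tri \<Longrightarrow> {v,v'} \<in> F \<Longrightarrow> v \<noteq> v' \<Longrightarrow> P v \<Longrightarrow> P v'"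
    and v: "v \<in> Tri" "v \<in> \<Union>F"
  shows "P v"
proof -
  define U where "U = {x. (x \<in> Tri \<and> P x) \<or> (x \<notin> Tri \<and> (\<exists>z. {x,z} \<in> F \<and> z \<in> Tri \<and> P z))}"
  have r: "(adj F)\<^sup>*\<^sup>* v0 v" using c v0(2) v(2) unfolding graph_connected_def by blast
  have "v \<in> U" using r
  proof (induction rule: rtranclp_induct)
    case base then show ?case unfolding U_def using v0 P0 by blast
  next
    case (step y z)
    have yz: "{y,z} \<in> F" using step(2) unfolding adj_def .
    have yzE: "{y,z} \<in> E" using yz F by blast
    have ne: "y \<noteq> z" using edge_ne[OF yzE] .
    have "(y \<in> Tri \<and> P y) \<or> (y \<notin> Tri \<and> (\<exists>z. {y,z} \<in> F \<and> z \<in> Tri \<and> P z))"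
      using step(3) unfolding U_def by simp
    then show ?case
    proof (elim disjE conjE exE)
      assume a: "y \<in> Tri" "P y"
      show ?thesis
      proof (cases "z \<in> Tri")
        case True then have "P z" using st[OF a(1) True yz ne a(2)] by simp
        then show ?thesis unfolding U_def using True by blast
      next
        case False
        have "{z,y} \<in> F" using yz by (simp add: insert_commute)
        then show ?thesis unfolding U_def using False a by blast
      qed
    next
      fix z0 assume b: "y \<notin> Tri" "{y,z0} \<in> F" "z0 \<in> Tri" "P z0"
      have yV: "y \<in> V" using yzE E_sub by blast
      have "{y,z0} \<in> E" using b(2) F by blast
      then have "{y,z} = {y,z0}" using leaf_unique[OF yV b(1) yzE] by simp
      then have "z = z0" using ne by (simp add: doubleton_eq_iff)
      then show ?thesis unfolding U_def using b by blast
    qed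
  qed
  then show ?thesis unfolding U_def using v(1) by blast
qed

end

context ctx begin

lemma GC:
  fixes Ok :: "'v \<Rightarrow> (nat \<Rightarrow> nat) \<Rightarrow> bool"
  assumes Okg: "\<And>v s. Ok v s \<Longrightarrow> s \<in> Gens"
    and Ext: "\<And>v s j v' j'. v \<in> Tri \<Longrightarrow> v' \<in> Tri \<Longrightarrow> v \<noteq> v' \<Longrightarrow> Ok v s \<Longrightarrow> j \<in> {1,2,3} \<Longrightarrow> j' \<in> {1,2,3}
       \<Longrightarrow> sd v j = sd v' j' \<Longrightarrow> side_weight s j \<noteq> (0,0)
       \<Longrightarrow> \<exists>s'. Ok v' s' \<and> side_weight s' j' = prod.swap (side_weight s j)"
    and v0: "v0 \<in> Tri" and s0: "Ok v0 s0"
  shows "\<exists>g. inQ V E sd g \<and> g v0 = s0 \<and> (\<forall>v\<in>Tri. g v = (\<lambda>k. 0) \<or> Ok v (g v))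
            \<and> (\<forall>x\<in>\<Union>(supp V E sd g). (adj (supp V E sd g))\<^sup>*\<^sup>* v0 x)"
proof -
  define N where "N g = {v \<in> Tri. g v \<noteq> (\<lambda>k::nat. 0::nat)}" for g :: "'v \<Rightarrow> nat \<Rightarrow> nat"
  define R where "R g x y \<longleftrightarrow> x \<in> N g \<and> y \<in> N g \<and> x \<noteq> y \<and>
      (\<exists>j\<in>{1,2,3}. sd x j = {x,y} \<and> side_weight (g x) j \<noteq> (0,0))" for g x y
  define cons where "cons g \<longleftrightarrow> (\<forall>v\<in>Tri. \<forall>v'\<in>Tri. \<forall>j\<in>{1,2,3}. \<forall>j'\<in>{1,2,3}. v \<noteq> v' \<longrightarrow>
      sd v j = sd v' j' \<longrightarrow> g v \<noteq> (\<lambda>k. 0) \<longrightarrow> g v' \<noteq> (\<lambda>k. 0) \<longrightarrow>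
      side_weight (g v) j = prod.swap (side_weight (g v') j'))" for g :: "'v \<Rightarrow> nat \<Rightarrow> nat"
  define PS where "PS g \<longleftrightarrow> (\<forall>v. v \<notin> Tri \<longrightarrow> g v = (\<lambda>k. 0)) \<and> (\<forall>v\<in>Tri. g v = (\<lambda>k. 0) \<or> Ok v (g v))
      \<and> g v0 = s0 \<and> cons g \<and> (\<forall>v\<in>N g. (R g)\<^sup>*\<^sup>* v0 v)" for g
  have s0nz: "s0 \<noteq> (\<lambda>k. 0)" using gens_nz[OF Okg[OF s0]] .
  define g0 where "g0 = (\<lambda>v. if v = v0 then s0 else (\<lambda>k::nat. 0::nat))"
  have N0: "N g0 = {v0}" unfolding N_def g0_def using v0 s0nz by auto
  have "PS g0"
    unfolding PS_def
  proof (intro conjI allI impI ballI)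
    fix v assume "v \<notin> Tri" then show "g0 v = (\<lambda>k. 0)" unfolding g0_def using v0 by auto
  next
    fix v assume "v \<in> Tri" then show "g0 v = (\<lambda>k. 0) \<or> Ok v (g0 v)" unfolding g0_def using s0 by auto
  next
    show "g0 v0 = s0" unfolding g0_def by simp
  next
    show "cons g0" unfolding cons_def
    proof (intro ballI impI)
      fix v v' :: 'v and j j' :: nat assume a: "v \<noteq> v'" "g0 v \<noteq> (\<lambda>k. 0)" "g0 v' \<noteq> (\<lambda>k. 0)"
      have "v = v0" using a(2) unfolding g0_def by (cases "v = v0") simp_all
      moreover have "v' = v0" using a(3) unfolding g0_def by (cases "v' = v0") simp_all
      ultimately show "side_weight (g0 v) j = prod.swap (side_weight (g0 v') j')" using a(1) by simp
    qed
  next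
    fix v assume "v \<in> N g0" then show "(R g0)\<^sup>*\<^sup>* v0 v" using N0 by simp
  qed
  have bnd: "\<forall>g. PS g \<longrightarrow> card (N g) < Suc (card Tri)"
  proof (intro allI impI)
    fix g have "N g \<subseteq> Tri" unfolding N_def by blast
    then have "card (N g) \<le> card Tri" using finTri card_mono by blast
    then show "card (N g) < Suc (card Tri)" by simp
  qed
  obtain g where PSg: "PS g" and mx: "\<And>g'. PS g' \<Longrightarrow> card (N g') \<le> card (N g)"
    using ex_has_greatest_nat[of PS g0 "\<lambda>g. card (N g)" "Suc (card Tri)", OF \<open>PS g0\<close> bnd] by blast
  have off: "\<And>v. v \<notin> Tri \<Longrightarrow> g v = (\<lambda>k. 0)" using PSg unfolding PS_def by blast
  have okv: "\<And>v. v \<in> Tri \<Longrightarrow> g v = (\<lambda>k. 0) \<or> Ok v (g v)" using PSg unfolding PS_def by blast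
  have gv0: "g v0 = s0" using PSg unfolding PS_def by blast
  have cg: "cons g" using PSg unfolding PS_def by blast
  have cn: "\<And>v. v \<in> N g \<Longrightarrow> (R g)\<^sup>*\<^sup>* v0 v" using PSg unfolding PS_def by blast
  have consD: "\<And>v v' j j'. v \<in> Tri \<Longrightarrow> v' \<in> Tri \<Longrightarrow> j \<in> {1,2,3} \<Longrightarrow> j' \<in> {1,2,3} \<Longrightarrow> v \<noteq> v' \<Longrightarrow>
      sd v j = sd v' j' \<Longrightarrow> g v \<noteq> (\<lambda>k. 0) \<Longrightarrow> g v' \<noteq> (\<lambda>k. 0) \<Longrightarrow>
      side_weight (g v) j = prod.swap (side_weight (g v') j')"
    using cg unfolding cons_def by blast
  have Rsym: "\<And>x y. R g x y \<Longrightarrow> R g y x"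
  proof -
    fix x y assume r: "R g x y"
    then have xN: "x \<in> N g" and yN: "y \<in> N g" and ne: "x \<noteq> y" unfolding R_def by auto
    obtain j where j: "j \<in> {1,2,3}" "sd x j = {x,y}" "side_weight (g x) j \<noteq> (0,0)"
      using r unfolding R_def by blast
    have xT: "x \<in> Tri" and yT: "y \<in> Tri" and gx: "g x \<noteq> (\<lambda>k. 0)" and gy: "g y \<noteq> (\<lambda>k. 0)"
      using xN yN unfolding N_def by auto
    have eE: "{x,y} \<in> E" using sd_E[OF xT j(1)] j(2) by simp
    obtain j' where j': "j' \<in> {1,2,3}" "sd y j' = {x,y}" using sd_surj[OF yT eE] by blast
    have "side_weight (g x) j = prod.swap (side_weight (g y) j')"
      using consD[OF xT yT j(1) j'(1) ne _ gx gy] j(2) j'(2) by simp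
    then have "side_weight (g y) j' \<noteq> (0,0)" using j(3) by (simp add: swap_00)
    moreover have "sd y j' = {y,x}" using j'(2) by (simp add: insert_commute)
    ultimately show "R g y x" unfolding R_def using xN yN ne j'(1) by blast
  qed
  have Rconn: "\<And>x y. x \<in> N g \<Longrightarrow> y \<in> N g \<Longrightarrow> (R g)\<^sup>*\<^sup>* x y"
  proof -
    fix x y assume "x \<in> N g" "y \<in> N g"
    then have a: "(R g)\<^sup>*\<^sup>* v0 x" "(R g)\<^sup>*\<^sup>* v0 y" using cn by blast+
    have "(R g)\<^sup>*\<^sup>* x v0" using rt_sym_gen[of "R g", OF Rsym a(1)] by blast
    then have "(R g)\<^sup>*\<^sup>* x v0" "(R g)\<^sup>*\<^sup>* v0 y" using a by blast+
    then show "(R g)\<^sup>*\<^sup>* x y" by (rule rtranclp_trans)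
  qed
  have key: "\<And>v j v' j'. v \<in> N g \<Longrightarrow> v' \<in> Tri \<Longrightarrow> g v' = (\<lambda>k. 0) \<Longrightarrow> v \<noteq> v' \<Longrightarrow> j \<in> {1,2,3} \<Longrightarrow>
       j' \<in> {1,2,3} \<Longrightarrow> sd v j = sd v' j' \<Longrightarrow> side_weight (g v) j \<noteq> (0,0) \<Longrightarrow> False"
  proof -
    fix v j v' j'
    assume vN: "v \<in> N g" and v'T: "v' \<in> Tri" and gv': "g v' = (\<lambda>k. 0)" and nev: "v \<noteq> v'"
      and j: "j \<in> {1,2,3}" and j': "j' \<in> {1,2,3}" and sdj: "sd v j = sd v' j'"
      and nzj: "side_weight (g v) j \<noteq> (0,0)"
    have vT: "v \<in> Tri" and gv: "g v \<noteq> (\<lambda>k. 0)" using vN unfolding N_def by auto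
    have okv': "Ok v (g v)" using okv[OF vT] gv by blast
    obtain s' where s': "Ok v' s'" "side_weight s' j' = prod.swap (side_weight (g v) j)"
      using Ext[OF vT v'T nev okv' j j' sdj nzj] by blast
    have s'nz: "s' \<noteq> (\<lambda>k. 0)" using gens_nz[OF Okg[OF s'(1)]] .
    define g' where "g' = g(v' := s')"
    have eE: "sd v j \<in> E" "v \<in> sd v j" using sd_E[OF vT j] by auto
    have "v' \<in> sd v j" using sd_E[OF v'T j'] sdj by simp
    then have e_eq: "sd v j = {v,v'}" using edge_eq[OF eE(1) eE(2) _ nev] by simp
    have v'N: "v' \<notin> N g" unfolding N_def using gv' by simp
    have noother: "\<And>u i i'. u \<in> N g \<Longrightarrow> u \<noteq> v \<Longrightarrow> i \<in> {1,2,3} \<Longrightarrow> i' \<in> {1,2,3} \<Longrightarrow> sd v' i = sd u i' \<Longrightarrow> False"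
    proof -
      fix u i i' assume uN: "u \<in> N g" and unv: "u \<noteq> v" and i: "i \<in> {1,2,3}" and i': "i' \<in> {1,2,3}"
        and sdi: "sd v' i = sd u i'"
      have uT: "u \<in> Tri" using uN unfolding N_def by auto
      have fE: "sd v' i \<in> E" "v' \<in> sd v' i" using sd_E[OF v'T i] by auto
      have "u \<in> sd v' i" using sd_E[OF uT i'] sdi by simp
      moreover have unv': "v' \<noteq> u" using uN v'N by blast
      ultimately have f_eq: "sd v' i = {v',u}" using edge_eq[OF fE(1) fE(2)] by simp
      have fE': "{v',u} \<in> E" using fE(1) f_eq by simp
      have "(R g)\<^sup>*\<^sup>* v u" using Rconn[OF vN uN] .
      then have p1: "(adj (E - {{v',u}}))\<^sup>*\<^sup>* v u"
      proof (rule rt_lift)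
        fix x y assume r: "R g x y"
        then have xN: "x \<in> N g" and yN: "y \<in> N g" unfolding R_def by auto
        obtain jx where jx: "jx \<in> {1,2,3}" "sd x jx = {x,y}" using r unfolding R_def by blast
        have xT: "x \<in> Tri" using xN unfolding N_def by auto
        have "{x,y} \<in> E" using sd_E[OF xT jx(1)] jx(2) by simp
        moreover have "{x,y} \<noteq> {v',u}" using xN yN v'N by auto
        ultimately have "adj (E - {{v',u}}) x y" unfolding adj_def by simp
        then show "(adj (E - {{v',u}}))\<^sup>*\<^sup>* x y" by simp
      qed
      have "{v',v} \<in> E" using eE(1) e_eq by (simp add: insert_commute)
      moreover have "{v',v} \<noteq> {v',u}" using unv nev by (auto simp: doubleton_eq_iff)
      ultimately have "adj (E - {{v',u}}) v' v" unfolding adj_def by simp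
      then have "(adj (E - {{v',u}}))\<^sup>*\<^sup>* v' u" using p1 converse_rtranclp_into_rtranclp by metis
      then show False using T1[OF fE'] by blast
    qed
    have Ng': "N g' = insert v' (N g)"
      unfolding N_def g'_def using v'T s'nz by auto
    have "PS g'"
      unfolding PS_def
    proof (intro conjI allI impI ballI)
      fix x assume "x \<notin> Tri" then show "g' x = (\<lambda>k. 0)" unfolding g'_def using v'T off by auto
    next
      fix x assume "x \<in> Tri" then show "g' x = (\<lambda>k. 0) \<or> Ok x (g' x)" unfolding g'_def using okv s'(1) by auto
    next
      have "v0 \<noteq> v'" using gv0 gv' s0nz by auto
      then show "g' v0 = s0" unfolding g'_def using gv0 by simp
    next
      show "cons g'" unfolding cons_def
      proof (intro ballI impI)
        fix a b ia ib assume aT: "a \<in> Tri" and bT: "b \<in> Tri" and ia: "ia \<in> {1,2,3}" and ib: "ib \<in> {1,2,3}"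
          and nab: "a \<noteq> b" and sdab: "sd a ia = sd b ib" and ga: "g' a \<noteq> (\<lambda>k. 0)" and gb: "g' b \<noteq> (\<lambda>k. 0)"
        show "side_weight (g' a) ia = prod.swap (side_weight (g' b) ib)"
        proof (cases "a = v'")
          case True
          then have bnv': "b \<noteq> v'" using nab by simp
          have bN: "b \<in> N g" using gb bT bnv' unfolding N_def g'_def by simp
          show ?thesis
          proof (cases "b = v")
            case True
            have "v' \<in> sd v ib" using sd_E[OF v'T ia] sdab \<open>a = v'\<close> True by simp
            then have "sd v ib = {v,v'}" using edge_eq[OF _ _ _ nev] sd_E[OF vT ib] by simp
            then have "sd v ib = sd v j" using e_eq by simp
            then have ibj: "ib = j" using sd_inj[OF vT ib j] by simp
            have "sd v' ia = sd v' j'" using sdab \<open>a = v'\<close> True ibj sdj by simp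
            then have iaj: "ia = j'" using sd_inj[OF v'T ia j'] by simp
            show ?thesis unfolding g'_def using \<open>a = v'\<close> True nev ibj iaj s'(2) by simp
          next
            case False
            have "False" using noother[OF bN False ia ib] sdab \<open>a = v'\<close> by simp
            then show ?thesis ..
          qed
        next
          case anv': False
          show ?thesis
          proof (cases "b = v'")
            case True
            have aN: "a \<in> N g" using ga aT anv' unfolding N_def g'_def by simp
            show ?thesis
            proof (cases "a = v")
              case True
              have "v' \<in> sd v ia" using sd_E[OF v'T ib] sdab \<open>b = v'\<close> True by simp
              then have "sd v ia = {v,v'}" using edge_eq[OF _ _ _ nev] sd_E[OF vT ia] by simp
              then have "sd v ia = sd v j" using e_eq by simp
              then have iaj: "ia = j" using sd_inj[OF vT ia j] by simp
              have "sd v' ib = sd v' j'" using sdab \<open>b = v'\<close> True iaj sdj by simp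
              then have ibj: "ib = j'" using sd_inj[OF v'T ib j'] by simp
              show ?thesis unfolding g'_def using \<open>b = v'\<close> True nev ibj iaj s'(2) by simp
            next
              case False
              have "False" using noother[OF aN False ib ia] sdab \<open>b = v'\<close> by simp
              then show ?thesis ..
            qed
          next
            case bnv': False
            have "g' a = g a" "g' b = g b" unfolding g'_def using anv' bnv' by auto
            then show ?thesis using consD[OF aT bT ia ib nab sdab] ga gb by simp
          qed
        qed
      qed
    next
      fix x assume xN: "x \<in> N g'"
      have Rmono: "\<And>a b. R g a b \<Longrightarrow> R g' a b"
      proof -
        fix a b assume r: "R g a b"
        then have "a \<in> N g" "b \<in> N g" unfolding R_def by auto
        then have "a \<noteq> v'" "g' a = g a" unfolding g'_def using v'N by auto
        then show "R g' a b" using r unfolding R_def Ng' by auto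
      qed
      have lift: "\<And>y. y \<in> N g \<Longrightarrow> (R g')\<^sup>*\<^sup>* v0 y"
      proof -
        fix y assume "y \<in> N g"
        then have "(R g)\<^sup>*\<^sup>* v0 y" using cn by blast
        then show "(R g')\<^sup>*\<^sup>* v0 y" by (rule rt_lift) (rule r_into_rtranclp, erule Rmono)
      qed
      show "(R g')\<^sup>*\<^sup>* v0 x"
      proof (cases "x = v'")
        case True
        have m: "v \<in> N g'" "v' \<in> N g'" using Ng' vN by auto
        have "g' v = g v" unfolding g'_def using nev by simp
        then have "R g' v v'" unfolding R_def using m nev e_eq j nzj by auto
        then show ?thesis using lift[OF vN] True by simp
      next
        case False then show ?thesis using xN Ng' lift by simp
      qed
    qed
    then have "card (N g') \<le> card (N g)" by (rule mx)
    moreover have "card (N g') = Suc (card (N g))"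
    proof -
      have "finite (N g)" unfolding N_def using finTri by simp
      then show ?thesis unfolding Ng' using v'N by simp
    qed
    ultimately show False by simp
  qed
  have Qg: "inQ V E sd g"
    unfolding inQ_def
  proof (intro conjI allI impI ballI)
    fix v k assume "v \<notin> Tri" then show "g v k = 0" using off by simp
  next
    fix v assume vT: "v \<in> Tri"
    show "is_bz (g v)" using okv[OF vT] bz_Z gens_bz Okg by auto
  next
    fix v v' j j' assume vT: "v \<in> Tri" and v'T: "v' \<in> Tri" and j: "j \<in> {1,2,3}" and j': "j' \<in> {1,2,3}"
      and ne: "v \<noteq> v'" and sdj: "sd v j = sd v' j'"
    show "side_weight (g v) j = prod.swap (side_weight (g v') j')"
    proof (cases "g v = (\<lambda>k. 0)")
      case True
      show ?thesis
      proof (cases "g v' = (\<lambda>k. 0)")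
        case True then show ?thesis using \<open>g v = _\<close> by (simp add: sw_Z)
      next
        case False
        have "side_weight (g v') j' = (0,0)"
        proof (rule ccontr)
          assume "side_weight (g v') j' \<noteq> (0,0)"
          moreover have "v' \<in> N g" unfolding N_def using v'T False by simp
          ultimately show False using key[OF _ vT \<open>g v = _\<close> ne[symmetric] j' j sdj[symmetric]] by blast
        qed
        then show ?thesis using \<open>g v = _\<close> by (simp add: sw_Z)
      qed
    next
      case False
      show ?thesis
      proof (cases "g v' = (\<lambda>k. 0)")
        case True
        have "side_weight (g v) j = (0,0)"
        proof (rule ccontr)
          assume "side_weight (g v) j \<noteq> (0,0)"
          moreover have "v \<in> N g" unfolding N_def using vT False by simp
          ultimately show False using key[OF _ v'T \<open>g v' = _\<close> ne j j' sdj] by blast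
        qed
        then show ?thesis using \<open>g v' = _\<close> by (simp add: sw_Z)
      next
        case False
        then show ?thesis using consD[OF vT v'T j j' ne sdj] \<open>g v \<noteq> _\<close> by simp
      qed
    qed
  qed
  have Rsupp: "\<And>a b. R g a b \<Longrightarrow> adj (supp V E sd g) a b"
  proof -
    fix a b assume r: "R g a b"
    then have aN: "a \<in> N g" unfolding R_def by auto
    then have aT: "a \<in> Tri" unfolding N_def by auto
    obtain j where j: "j \<in> {1,2,3}" "sd a j = {a,b}" "side_weight (g a) j \<noteq> (0,0)"
      using r unfolding R_def by blast
    have "\<exists>j\<in>{1,2,3}. {a,b} = sd a j \<and> side_weight (g a) j \<noteq> (0,0)" using j by (intro bexI[of _ j]) simp_all
    then have "{a,b} \<in> supp V E sd g \<and> a \<in> {a,b}" by (rule iffD2[OF SUPPX[OF Qg aT, of "{a,b}"]])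
    then have "{a,b} \<in> supp V E sd g" by (rule conjunct1)
    then show "adj (supp V E sd g) a b" unfolding adj_def .
  qed
  have conn: "\<forall>x\<in>\<Union>(supp V E sd g). (adj (supp V E sd g))\<^sup>*\<^sup>* v0 x"
  proof
    fix x assume "x \<in> \<Union>(supp V E sd g)"
    then obtain e where e: "e \<in> supp V E sd g" "x \<in> e" by blast
    then obtain v j where vj: "v \<in> Tri" "j \<in> {1,2,3}" "sd v j = e" "side_weight (g v) j \<noteq> (0,0)" "e \<in> E"
      unfolding supp_def by blast
    have "g v \<noteq> (\<lambda>k. 0)"
    proof
      assume "g v = (\<lambda>k. 0)" then show False using vj(4) by (simp add: sw_Z)
    qed
    then have vN: "v \<in> N g" unfolding N_def using vj(1) by simp
    have p: "(adj (supp V E sd g))\<^sup>*\<^sup>* v0 v" using cn[OF vN] by (rule rt_lift) (rule r_into_rtranclp, erule Rsupp)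
    show "(adj (supp V E sd g))\<^sup>*\<^sup>* v0 x"
    proof (cases "x = v")
      case True then show ?thesis using p by simp
    next
      case False
      have "v \<in> e" using sd_E[OF vj(1,2)] vj(3) by simp
      then have "e = {v,x}" using edge_eq[OF vj(5) _ e(2)] False by simp
      then have "adj (supp V E sd g) v x" unfolding adj_def using e(1) by simp
      then show ?thesis by (rule rtranclp.rtrancl_into_rtrancl[OF p])
    qed
  qed
  show ?thesis
  proof (intro exI[of _ g] conjI)
    show "\<forall>v\<in>Tri. g v = (\<lambda>k. 0) \<or> Ok v (g v)" using okv by blast
  qed (fact Qg gv0 conn)+
qed

end

lemma sw_mono: "(\<forall>k. s k \<le> t k) \<Longrightarrow> fst (side_weight s j) \<le> fst (side_weight t j) \<and> snd (side_weight s j) \<le> snd (side_weight t j)"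
  by (simp add: side_weight_def add_mono)

lemma sw_diff: "(\<forall>k. s k \<le> t k) \<Longrightarrow> side_weight (\<lambda>k. t k - s k) j =
   (fst (side_weight t j) - fst (side_weight s j), snd (side_weight t j) - snd (side_weight s j))"
  by (simp add: side_weight_def)

lemma bz_diff: "is_bz s \<Longrightarrow> is_bz t \<Longrightarrow> (\<forall>k. s k \<le> t k) \<Longrightarrow> is_bz (\<lambda>k. t k - s k)"
proof -
  assume a: "is_bz s" "is_bz t" "\<forall>k. s k \<le> t k"
  have l: "s 1 \<le> t 1" "s 2 \<le> t 2" "s 3 \<le> t 3" "s 4 \<le> t 4" "s 6 \<le> t 6" "s 7 \<le> t 7" using a(3) by auto
  have h: "s 1 + s 2 = s 6 + s 7" "s 2 + s 4 = s 3 + s 6" "s 4 + s 7 = s 1 + s 3" "\<forall>k\<ge>9. s k = 0"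
    using a(1) unfolding is_bz_def by auto
  have h': "t 1 + t 2 = t 6 + t 7" "t 2 + t 4 = t 3 + t 6" "t 4 + t 7 = t 1 + t 3" "\<forall>k\<ge>9. t k = 0"
    using a(2) unfolding is_bz_def by auto
  show ?thesis unfolding is_bz_def using l h h' by simp
qed

context ctx begin

definition good :: "('v \<Rightarrow> nat \<Rightarrow> nat) \<Rightarrow> bool" where
  "good w \<longleftrightarrow> inQ V E sd w \<and> w \<noteq> zeroQ \<and> (\<forall>v\<in>Tri. w v = (\<lambda>k. 0) \<or> w v \<in> Gens)
     \<and> graph_connected (\<Union>(supp V E sd w)) (supp V E sd w)"

lemma sd_supp: "inQ V E sd w \<Longrightarrow> v \<in> Tri \<Longrightarrow> j \<in> {1,2,3} \<Longrightarrow>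
   sd v j \<in> supp V E sd w \<longleftrightarrow> side_weight (w v) j \<noteq> (0,0)"
proof -
  assume Q: "inQ V E sd w" and x: "v \<in> Tri" and j: "j \<in> {1,2,3}"
  have "j \<in> {j \<in> {1,2,3}. sd v j \<in> supp V E sd w} \<longleftrightarrow> j \<in> {j \<in> {1,2,3}. side_weight (w v) j \<noteq> (0,0)}"
    using supp_sides[OF Q x] by simp
  then show ?thesis using j by simp
qed

lemma nz_exists: "w \<noteq> zeroQ \<Longrightarrow> \<exists>v. w v \<noteq> (\<lambda>k. 0)"
proof (rule ccontr)
  assume "w \<noteq> zeroQ" "\<not> (\<exists>v. w v \<noteq> (\<lambda>k. 0))"
  then show False unfolding zeroQ_def by (simp add: fun_eq_iff)
qed

lemma nz_in_supp: "inQ V E sd w \<Longrightarrow> v \<in> Tri \<Longrightarrow> w v \<noteq> (\<lambda>k. 0) \<Longrightarrow> v \<in> \<Union>(supp V E sd w)"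
proof -
  assume Q: "inQ V E sd w" and vT: "v \<in> Tri" and nz: "w v \<noteq> (\<lambda>k. 0)"
  obtain j where j: "j \<in> {1,2,3}" "side_weight (w v) j \<noteq> (0,0)" using nz_side[OF Q vT nz] by blast
  then have "sd v j \<in> supp V E sd w" using sd_supp[OF Q vT j(1)] by simp
  moreover have "v \<in> sd v j" using sd_E[OF vT j(1)] by simp
  ultimately show ?thesis by blast
qed

lemma conn_from:
  assumes "\<forall>x\<in>\<Union>F. (adj F)\<^sup>*\<^sup>* v0 x"
  shows "graph_connected (\<Union>F) F"
  unfolding graph_connected_def
proof (intro ballI)
  fix x y assume "x \<in> \<Union>F" "y \<in> \<Union>F"
  then have "(adj F)\<^sup>*\<^sup>* v0 x" "(adj F)\<^sup>*\<^sup>* v0 y" using assms by blast+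
  then show "(adj F)\<^sup>*\<^sup>* x y" using rt_sym rtranclp_trans by metis
qed

lemma good_min: assumes gd: "good w" shows "min_gen V E sd w"
proof -
  have Q: "inQ V E sd w" and nz: "w \<noteq> zeroQ" and gv: "\<And>v. v \<in> Tri \<Longrightarrow> w v = (\<lambda>k. 0) \<or> w v \<in> Gens"
    and c: "graph_connected (\<Union>(supp V E sd w)) (supp V E sd w)" using gd unfolding good_def by auto
  have "\<not> (\<exists>u1 u2. inQ V E sd u1 \<and> inQ V E sd u2 \<and> u1 \<noteq> zeroQ \<and> u2 \<noteq> zeroQ \<and> w = addQ u1 u2)"
  proof
    assume "\<exists>u1 u2. inQ V E sd u1 \<and> inQ V E sd u2 \<and> u1 \<noteq> zeroQ \<and> u2 \<noteq> zeroQ \<and> w = addQ u1 u2"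
    then obtain u1 u2 where Q1: "inQ V E sd u1" and Q2: "inQ V E sd u2" and n1: "u1 \<noteq> zeroQ"
      and n2: "u2 \<noteq> zeroQ" and wu: "w = addQ u1 u2" by blast
    have wk: "\<And>v k. w v k = u1 v k + u2 v k" using wu unfolding addQ_def by simp
    have excl: "\<And>v. v \<in> Tri \<Longrightarrow> u1 v = (\<lambda>k. 0) \<or> u2 v = (\<lambda>k. 0)"
    proof -
      fix v assume vT: "v \<in> Tri"
      show "u1 v = (\<lambda>k. 0) \<or> u2 v = (\<lambda>k. 0)"
      proof (cases "w v = (\<lambda>k. 0)")
        case True
        then have "\<forall>k. u1 v k = 0" using wk by (metis add_is_0)
        then show ?thesis by (simp add: fun_eq_iff)
      next
        case False
        then have "w v \<in> Gens" using gv[OF vT] by blast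
        moreover have "\<forall>k. u1 v k + u2 v k = w v k" using wk by simp
        ultimately show ?thesis using L5 Q_bz[OF Q1 vT] Q_bz[OF Q2 vT] by blast
      qed
    qed
    have wnz: "\<And>v. u1 v \<noteq> (\<lambda>k. 0) \<Longrightarrow> w v \<noteq> (\<lambda>k. 0)"
    proof -
      fix v assume a: "u1 v \<noteq> (\<lambda>k. 0)"
      show "w v \<noteq> (\<lambda>k. 0)"
      proof
        assume "w v = (\<lambda>k. 0)"
        then have "\<forall>k. u1 v k = 0" using wk by (metis add_is_0)
        then show False using a by (simp add: fun_eq_iff)
      qed
    qed
    obtain v1 where v1: "u1 v1 \<noteq> (\<lambda>k. 0)" using nz_exists[OF n1] by blast
    have v1T: "v1 \<in> Tri" using v1 Q_off[OF Q1] by blast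
    have v1F: "v1 \<in> \<Union>(supp V E sd w)" using nz_in_supp[OF Q v1T wnz[OF v1]] .
    have u2v1: "u2 v1 = (\<lambda>k. 0)" using excl[OF v1T] v1 by blast
    have allP: "\<And>v. v \<in> Tri \<Longrightarrow> v \<in> \<Union>(supp V E sd w) \<Longrightarrow> u2 v = (\<lambda>k. 0)"
    proof -
      fix v assume "v \<in> Tri" "v \<in> \<Union>(supp V E sd w)"
      then show "u2 v = (\<lambda>k. 0)"
      proof (rule propag[OF supp_E c v1T v1F, of "\<lambda>v. u2 v = (\<lambda>k. 0)", rotated 2])
        show "u2 v1 = (\<lambda>k. 0)" by (rule u2v1)
      next
        fix a b assume aT: "a \<in> Tri" and bT: "b \<in> Tri" and ab: "{a,b} \<in> supp V E sd w" and ne: "a \<noteq> b"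
          and pa: "u2 a = (\<lambda>k. 0)"
        have "{a,b} \<in> supp V E sd w \<and> a \<in> {a,b}" using ab by simp
        then obtain j where j: "j \<in> {1,2,3}" "{a,b} = sd a j" "side_weight (w a) j \<noteq> (0,0)"
          using SUPPX[OF Q aT] by blast
        have abE: "{a,b} \<in> E" using ab supp_E by blast
        obtain j' where j': "j' \<in> {1,2,3}" "sd b j' = {a,b}" using sd_surj[OF bT abE] by blast
        have "u1 a = w a" using pa wk by (simp add: fun_eq_iff)
        then have "side_weight (u1 a) j \<noteq> (0,0)" using j(3) by simp
        then have "side_weight (u1 b) j' \<noteq> (0,0)"
          using glue_nz[OF Q1 aT bT ne j(1) j'(1)] j(2) j'(2) by simp
        then have "u1 b \<noteq> (\<lambda>k. 0)" by (auto simp: sw_Z)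
        then show "u2 b = (\<lambda>k. 0)" using excl[OF bT] by blast
      qed
    qed
    have "u2 = zeroQ"
    proof (rule ext)
      fix v show "u2 v = zeroQ v"
      proof (cases "v \<in> Tri")
        case False then show ?thesis using Q_off[OF Q2] unfolding zeroQ_def by simp
      next
        case True
        show ?thesis
        proof (cases "v \<in> \<Union>(supp V E sd w)")
          case True then show ?thesis using allP \<open>v \<in> Tri\<close> unfolding zeroQ_def by simp
        next
          case False
          then have "w v = (\<lambda>k. 0)" using nz_in_supp[OF Q \<open>v \<in> Tri\<close>] by blast
          then have "\<forall>k. u2 v k = 0" using wk by (metis add_is_0)
          then show ?thesis unfolding zeroQ_def by (simp add: fun_eq_iff)
        qed
      qed
    qed
    then show False using n2 by simp
  qed
  then show ?thesis unfolding min_gen_def using Q nz by simp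
qed

lemma min_good: assumes mg: "min_gen V E sd w" shows "good w"
proof -
  have Q: "inQ V E sd w" and nz: "w \<noteq> zeroQ"
    and irr: "\<not> (\<exists>u1 u2. inQ V E sd u1 \<and> inQ V E sd u2 \<and> u1 \<noteq> zeroQ \<and> u2 \<noteq> zeroQ \<and> w = addQ u1 u2)"
    using mg unfolding min_gen_def by auto
  obtain v0 where v0: "w v0 \<noteq> (\<lambda>k. 0)" using nz_exists[OF nz] by blast
  have v0T: "v0 \<in> Tri" using v0 Q_off[OF Q] by blast
  obtain j0 where j0: "j0 \<in> {1,2,3}" "side_weight (w v0) j0 \<noteq> (0,0)" using nz_side[OF Q v0T v0] by blast
  define x0 where "x0 = (if fst (side_weight (w v0) j0) \<noteq> 0 then (1::nat,0::nat) else (0,1))"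
  have x0: "x0 \<in> {(1,0),(0,1)}" "fst x0 \<le> fst (side_weight (w v0) j0)" "snd x0 \<le> snd (side_weight (w v0) j0)"
  proof -
    obtain a b where ab: "side_weight (w v0) j0 = (a,b)" by (cases "side_weight (w v0) j0")
    show "x0 \<in> {(1,0),(0,1)}" "fst x0 \<le> fst (side_weight (w v0) j0)" "snd x0 \<le> snd (side_weight (w v0) j0)"
      using j0(2) unfolding x0_def ab by auto
  qed
  define Ok where "Ok v s \<longleftrightarrow> s \<in> Gens \<and> (\<forall>k. s k \<le> w v k)" for v s
  obtain s0 where s0: "s0 \<in> Gens" "\<forall>k. s0 k \<le> w v0 k" "side_weight s0 j0 = x0"
    using Ldom[OF Q_bz[OF Q v0T] j0(1) x0] by blast
  have "\<exists>g. inQ V E sd g \<and> g v0 = s0 \<and> (\<forall>v\<in>Tri. g v = (\<lambda>k. 0) \<or> Ok v (g v))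
            \<and> (\<forall>x\<in>\<Union>(supp V E sd g). (adj (supp V E sd g))\<^sup>*\<^sup>* v0 x)"
  proof (rule GC)
    show "\<And>v s. Ok v s \<Longrightarrow> s \<in> Gens" unfolding Ok_def by blast
    show "v0 \<in> Tri" by (rule v0T)
    show "Ok v0 s0" unfolding Ok_def using s0 by blast
  next
    fix v s j v' j'
    assume vT: "v \<in> Tri" and v'T: "v' \<in> Tri" and ne: "v \<noteq> v'" and ok: "Ok v s" and j: "j \<in> {1,2,3}"
      and j': "j' \<in> {1,2,3}" and sdj: "sd v j = sd v' j'" and nzs: "side_weight s j \<noteq> (0,0)"
    have sG: "s \<in> Gens" and sle: "\<forall>k. s k \<le> w v k" using ok unfolding Ok_def by auto
    have u: "side_weight s j \<in> {(1,0),(0,1)}" using gens_sw[OF sG j] nzs by auto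
    have gl: "side_weight (w v) j = prod.swap (side_weight (w v') j')" by (rule Q_glue[OF Q vT v'T ne j j' sdj])
    have m: "fst (side_weight s j) \<le> fst (side_weight (w v) j) \<and> snd (side_weight s j) \<le> snd (side_weight (w v) j)"
      by (rule sw_mono[OF sle])
    have u': "prod.swap (side_weight s j) \<in> {(1,0),(0,1)}" using u by auto
    have le1: "fst (prod.swap (side_weight s j)) \<le> fst (side_weight (w v') j')"
      and le2: "snd (prod.swap (side_weight s j)) \<le> snd (side_weight (w v') j')"
      using m gl by (cases "side_weight (w v') j'", simp)+
    obtain s' where "s' \<in> Gens" "\<forall>k. s' k \<le> w v' k" "side_weight s' j' = prod.swap (side_weight s j)"
      using Ldom[OF Q_bz[OF Q v'T] j' u' le1 le2] by blast
    then show "\<exists>s'. Ok v' s' \<and> side_weight s' j' = prod.swap (side_weight s j)" unfolding Ok_def by blast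
  qed
  then obtain g where Qg: "inQ V E sd g" and gv0: "g v0 = s0" and okg: "\<forall>v\<in>Tri. g v = (\<lambda>k. 0) \<or> Ok v (g v)"
    and cg: "\<forall>x\<in>\<Union>(supp V E sd g). (adj (supp V E sd g))\<^sup>*\<^sup>* v0 x" by blast
  have gle: "\<And>v k. g v k \<le> w v k"
  proof -
    fix v k show "g v k \<le> w v k"
    proof (cases "v \<in> Tri")
      case True
      then show ?thesis using okg unfolding Ok_def by fastforce
    next
      case False then show ?thesis using Q_off[OF Qg] by simp
    qed
  qed
  define h where "h = (\<lambda>v k. w v k - g v k)"
  have Qh: "inQ V E sd h" unfolding inQ_def
  proof (intro conjI allI impI ballI)
    fix v k assume "v \<notin> Tri" then show "h v k = 0" unfolding h_def using Q_off[OF Q] by simp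
  next
    fix v assume vT: "v \<in> Tri"
    show "is_bz (h v)" unfolding h_def using bz_diff[OF Q_bz[OF Qg vT] Q_bz[OF Q vT]] gle by simp
  next
    fix v v' j j' assume vT: "v \<in> Tri" and v'T: "v' \<in> Tri" and j: "j \<in> {1,2,3}" and j': "j' \<in> {1,2,3}"
      and ne: "v \<noteq> v'" and sdj: "sd v j = sd v' j'"
    have "h v = (\<lambda>k. w v k - g v k)" "h v' = (\<lambda>k. w v' k - g v' k)" unfolding h_def by simp_all
    moreover have "side_weight (w v) j = prod.swap (side_weight (w v') j')" by (rule Q_glue[OF Q vT v'T ne j j' sdj])
    moreover have "side_weight (g v) j = prod.swap (side_weight (g v') j')" by (rule Q_glue[OF Qg vT v'T ne j j' sdj])
    ultimately show "side_weight (h v) j = prod.swap (side_weight (h v') j')"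
      using sw_diff[of "g v" "w v" j] sw_diff[of "g v'" "w v'" j'] gle
      by (cases "side_weight (w v') j'", cases "side_weight (g v') j'") auto
  qed
  have wgh: "w = addQ g h" unfolding addQ_def h_def using gle by (simp add: fun_eq_iff)
  have gnz: "g \<noteq> zeroQ"
  proof
    assume "g = zeroQ" then have "s0 = (\<lambda>k. 0)" using gv0 unfolding zeroQ_def by simp
    then show False using gens_nz[OF s0(1)] by simp
  qed
  have "h = zeroQ" using irr Qg Qh gnz wgh by blast
  then have wg: "w = g" using wgh unfolding addQ_def zeroQ_def by (simp add: fun_eq_iff)
  show ?thesis unfolding good_def
  proof (intro conjI)
    show "inQ V E sd w" by (rule Q)
    show "w \<noteq> zeroQ" by (rule nz)
    show "\<forall>v\<in>Tri. w v = (\<lambda>k. 0) \<or> w v \<in> Gens" using okg wg unfolding Ok_def by blast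
    show "graph_connected (\<Union>(supp V E sd w)) (supp V E sd w)" using conn_from[OF cg] wg by simp
  qed
qed

lemma min_iff: "min_gen V E sd w \<longleftrightarrow> good w"
  using min_good good_min by blast

lemma good_proper: "good w \<Longrightarrow> proper_subtree V E (supp V E sd w)"
  unfolding good_def using supp_proper by blast

end

context ctx begin

lemma J2:
  assumes vT: "v \<in> Tri" and F: "proper_subtree V E F" and vF: "v \<in> \<Union>F"
  shows "2 \<le> card {j \<in> {1,2,3}. sd v j \<in> F}"
proof -
  have FE: "F \<subseteq> E" using F unfolding proper_subtree_def by blast
  have d: "deg F v = card {j \<in> {1,2,3}. sd v j \<in> F}" by (rule deg_sides[OF vT FE])
  have fin: "finite {e \<in> F. v \<in> e}" using finE FE by (metis (no_types, lifting) finite_subset mem_Collect_eq subsetI subsetD)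
  have "{e \<in> F. v \<in> e} \<noteq> {}" using vF by blast
  then have d1: "deg F v \<noteq> 0" unfolding deg_def using fin by simp
  have "deg F v \<noteq> 1"
  proof
    assume "deg F v = 1"
    then have "v \<in> leaves V E" using F vF unfolding proper_subtree_def by blast
    then have "deg E v = 1" unfolding leaves_def by simp
    moreover have "deg E v = 3" using vT unfolding trinodes_def by simp
    ultimately show False by simp
  qed
  then have "2 \<le> deg F v" using d1 by linarith
  then show ?thesis using d by simp
qed

lemma sd_in_F: "v \<in> Tri \<Longrightarrow> F \<subseteq> E \<Longrightarrow> e \<in> F \<Longrightarrow> v \<in> e \<Longrightarrow> \<exists>j\<in>{1,2,3}. sd v j = e"
  using sd_surj by blast

lemma exist_gen:
  assumes F: "proper_subtree V E F" and v0T: "v0 \<in> Tri" and j0: "j0 \<in> {1,2,3}" and e0: "sd v0 j0 \<in> F"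
    and x: "x \<in> {(1,0),(0,1)}"
  shows "\<exists>g. good g \<and> supp V E sd g = F \<and> side_weight (g v0) j0 = x"
proof -
  have FE: "F \<subseteq> E" and Fc: "graph_connected (\<Union>F) F" using F unfolding proper_subtree_def by auto
  define Ok where "Ok v s \<longleftrightarrow> s \<in> Gens \<and> v \<in> \<Union>F \<and> (\<forall>j\<in>{1,2,3}. side_weight s j \<noteq> (0,0) \<longleftrightarrow> sd v j \<in> F)" for v s
  have v0F: "v0 \<in> \<Union>F" using e0 sd_E[OF v0T j0] by blast
  obtain s0 where s0: "s0 \<in> Gens" "\<forall>j'\<in>{1,2,3}. side_weight s0 j' \<noteq> (0,0) \<longleftrightarrow> j' \<in> {j \<in> {1,2,3}. sd v0 j \<in> F}"
      "side_weight s0 j0 = x"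
    using L2[of "{j \<in> {1,2,3}. sd v0 j \<in> F}" j0 x] J2[OF v0T F v0F] j0 e0 x by blast
  have okv0: "Ok v0 s0" unfolding Ok_def using s0 v0F by auto
  have "\<exists>g. inQ V E sd g \<and> g v0 = s0 \<and> (\<forall>v\<in>Tri. g v = (\<lambda>k. 0) \<or> Ok v (g v))
            \<and> (\<forall>x\<in>\<Union>(supp V E sd g). (adj (supp V E sd g))\<^sup>*\<^sup>* v0 x)"
  proof (rule GC)
    show "\<And>v s. Ok v s \<Longrightarrow> s \<in> Gens" unfolding Ok_def by blast
    show "v0 \<in> Tri" by (rule v0T)
    show "Ok v0 s0" by (rule okv0)
  next
    fix v s j v' j'
    assume vT: "v \<in> Tri" and v'T: "v' \<in> Tri" and ne: "v \<noteq> v'" and ok: "Ok v s" and j: "j \<in> {1,2,3}"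
      and j': "j' \<in> {1,2,3}" and sdj: "sd v j = sd v' j'" and nzs: "side_weight s j \<noteq> (0,0)"
    have sG: "s \<in> Gens" and sides: "\<forall>j\<in>{1,2,3}. side_weight s j \<noteq> (0,0) \<longleftrightarrow> sd v j \<in> F"
      using ok unfolding Ok_def by auto
    have eF: "sd v' j' \<in> F" using sides j nzs sdj by auto
    have v'F: "v' \<in> \<Union>F" using eF sd_E[OF v'T j'] by blast
    have u: "prod.swap (side_weight s j) \<in> {(1,0),(0,1)}" using gens_sw[OF sG j] nzs by auto
    obtain s' where s': "s' \<in> Gens" "\<forall>j''\<in>{1,2,3}. side_weight s' j'' \<noteq> (0,0) \<longleftrightarrow> j'' \<in> {j \<in> {1,2,3}. sd v' j \<in> F}"
      "side_weight s' j' = prod.swap (side_weight s j)"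
      using L2[of "{j \<in> {1,2,3}. sd v' j \<in> F}" j' "prod.swap (side_weight s j)"] J2[OF v'T F v'F] j' eF u by blast
    have "Ok v' s'" unfolding Ok_def using s' v'F by auto
    then show "\<exists>s'. Ok v' s' \<and> side_weight s' j' = prod.swap (side_weight s j)" using s'(3) by blast
  qed
  then obtain g where Qg: "inQ V E sd g" and gv0: "g v0 = s0" and okg: "\<forall>v\<in>Tri. g v = (\<lambda>k. 0) \<or> Ok v (g v)"
    by blast
  have okD: "\<And>v j. v \<in> Tri \<Longrightarrow> g v \<noteq> (\<lambda>k. 0) \<Longrightarrow> j \<in> {1,2,3} \<Longrightarrow> side_weight (g v) j \<noteq> (0,0) \<longleftrightarrow> sd v j \<in> F"
    using okg unfolding Ok_def by blast
  have allnz: "\<And>v. v \<in> Tri \<Longrightarrow> v \<in> \<Union>F \<Longrightarrow> g v \<noteq> (\<lambda>k. 0)"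
  proof -
    fix v assume "v \<in> Tri" "v \<in> \<Union>F"
    then show "g v \<noteq> (\<lambda>k. 0)"
    proof (rule propag[OF FE Fc v0T v0F, of "\<lambda>v. g v \<noteq> (\<lambda>k. 0)", rotated 2])
      show "g v0 \<noteq> (\<lambda>k. 0)" using gv0 gens_nz[OF s0(1)] by simp
    next
      fix a b assume aT: "a \<in> Tri" and bT: "b \<in> Tri" and ab: "{a,b} \<in> F" and ne: "a \<noteq> b"
        and pa: "g a \<noteq> (\<lambda>k. 0)"
      have abE: "{a,b} \<in> E" using ab FE by blast
      obtain j where j: "j \<in> {1,2,3}" "sd a j = {a,b}" using sd_surj[OF aT abE] by blast
      obtain j' where j': "j' \<in> {1,2,3}" "sd b j' = {a,b}" using sd_surj[OF bT abE] by blast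
      have "side_weight (g a) j \<noteq> (0,0)" using okD[OF aT pa j(1)] j(2) ab by simp
      then have "side_weight (g b) j' \<noteq> (0,0)" using glue_nz[OF Qg aT bT ne j(1) j'(1)] j(2) j'(2) by simp
      then show "g b \<noteq> (\<lambda>k. 0)" by (auto simp: sw_Z)
    qed
  qed
  have sF: "supp V E sd g = F"
  proof
    show "supp V E sd g \<subseteq> F"
    proof
      fix e assume e: "e \<in> supp V E sd g"
      then obtain v j where vj: "v \<in> Tri" "j \<in> {1,2,3}" "sd v j = e" "side_weight (g v) j \<noteq> (0,0)"
        unfolding supp_def by blast
      have "g v \<noteq> (\<lambda>k. 0)" using vj(4) by (auto simp: sw_Z)
      then show "e \<in> F" using okD[OF vj(1) _ vj(2)] vj(3,4) by blast
    qed
  next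
    show "F \<subseteq> supp V E sd g"
    proof
      fix e assume eF: "e \<in> F"
      then have eE: "e \<in> E" using FE by blast
      obtain v where v: "v \<in> e" "v \<in> Tri" using tri_edge eE by blast
      have gnz: "g v \<noteq> (\<lambda>k. 0)" using allnz[OF v(2)] eF v(1) by blast
      obtain j where j: "j \<in> {1,2,3}" "sd v j = e" using sd_surj[OF v(2) eE v(1)] by blast
      have "side_weight (g v) j \<noteq> (0,0)" using okD[OF v(2) gnz j(1)] j(2) eF by simp
      then show "e \<in> supp V E sd g" using sd_supp[OF Qg v(2) j(1)] j(2) by simp
    qed
  qed
  have gnz: "g \<noteq> zeroQ"
  proof
    assume "g = zeroQ" then have "s0 = (\<lambda>k. 0)" using gv0 unfolding zeroQ_def by simp
    then show False using gens_nz[OF s0(1)] by simp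
  qed
  have "good g" unfolding good_def
  proof (intro conjI)
    show "\<forall>v\<in>Tri. g v = (\<lambda>k. 0) \<or> g v \<in> Gens" using okg unfolding Ok_def by blast
    show "graph_connected (\<Union>(supp V E sd g)) (supp V E sd g)" using Fc sF by simp
  qed (fact Qg gnz)+
  then show ?thesis using sF gv0 s0(3) by blast
qed

lemma uniq_gen:
  assumes g1: "good h1" and g2: "good h2" and s1: "supp V E sd h1 = F" and s2: "supp V E sd h2 = F"
    and F: "proper_subtree V E F" and v0T: "v0 \<in> Tri" and j0: "j0 \<in> {1,2,3}" and e0: "sd v0 j0 \<in> F"
    and eq: "side_weight (h1 v0) j0 = side_weight (h2 v0) j0"
  shows "h1 = h2"
proof -
  have FE: "F \<subseteq> E" and Fc: "graph_connected (\<Union>F) F" using F unfolding proper_subtree_def by auto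
  have Q1: "inQ V E sd h1" and G1: "\<And>v. v \<in> Tri \<Longrightarrow> h1 v = (\<lambda>k. 0) \<or> h1 v \<in> Gens" using g1 unfolding good_def by auto
  have Q2: "inQ V E sd h2" and G2: "\<And>v. v \<in> Tri \<Longrightarrow> h2 v = (\<lambda>k. 0) \<or> h2 v \<in> Gens" using g2 unfolding good_def by auto
  have v0F: "v0 \<in> \<Union>F" using e0 sd_E[OF v0T j0] by blast
  have side1: "\<And>v j. v \<in> Tri \<Longrightarrow> j \<in> {1,2,3} \<Longrightarrow> side_weight (h1 v) j \<noteq> (0,0) \<longleftrightarrow> sd v j \<in> F"
    using sd_supp[OF Q1] s1 by blast
  have side2: "\<And>v j. v \<in> Tri \<Longrightarrow> j \<in> {1,2,3} \<Longrightarrow> side_weight (h2 v) j \<noteq> (0,0) \<longleftrightarrow> sd v j \<in> F"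
    using sd_supp[OF Q2] s2 by blast
  have sameL: "\<And>v j s t. v \<in> Tri \<Longrightarrow> j \<in> {1,2,3} \<Longrightarrow> side_weight (h1 v) j = side_weight (h2 v) j
       \<Longrightarrow> sd v j \<in> F \<Longrightarrow> h1 v = h2 v"
  proof -
    fix v j assume vT: "v \<in> Tri" and j: "j \<in> {1,2,3}" and e: "side_weight (h1 v) j = side_weight (h2 v) j"
      and jF: "sd v j \<in> F"
    have n1: "side_weight (h1 v) j \<noteq> (0,0)" using side1[OF vT j] jF by simp
    have n2: "side_weight (h2 v) j \<noteq> (0,0)" using side2[OF vT j] jF by simp
    have "h1 v \<in> Gens" using G1[OF vT] n1 by (auto simp: sw_Z)
    moreover have "h2 v \<in> Gens" using G2[OF vT] n2 by (auto simp: sw_Z)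
    moreover have "\<forall>j\<in>{1,2,3}. (side_weight (h1 v) j = (0,0)) = (side_weight (h2 v) j = (0,0))"
      using side1[OF vT] side2[OF vT] by blast
    ultimately show "h1 v = h2 v" using L3 j e n1 by blast
  qed
  have allP: "\<And>v. v \<in> Tri \<Longrightarrow> v \<in> \<Union>F \<Longrightarrow> h1 v = h2 v"
  proof -
    fix v assume "v \<in> Tri" "v \<in> \<Union>F"
    then show "h1 v = h2 v"
    proof (rule propag[OF FE Fc v0T v0F, of "\<lambda>v. h1 v = h2 v", rotated 2])
      show "h1 v0 = h2 v0" by (rule sameL[OF v0T j0 eq e0])
    next
      fix a b assume aT: "a \<in> Tri" and bT: "b \<in> Tri" and ab: "{a,b} \<in> F" and ne: "a \<noteq> b"
        and pa: "h1 a = h2 a"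
      have abE: "{a,b} \<in> E" using ab FE by blast
      obtain j where j: "j \<in> {1,2,3}" "sd a j = {a,b}" using sd_surj[OF aT abE] by blast
      obtain j' where j': "j' \<in> {1,2,3}" "sd b j' = {a,b}" using sd_surj[OF bT abE] by blast
      have sdj: "sd a j = sd b j'" using j j' by simp
      have "side_weight (h1 a) j = prod.swap (side_weight (h1 b) j')" by (rule Q_glue[OF Q1 aT bT ne j(1) j'(1) sdj])
      moreover have "side_weight (h2 a) j = prod.swap (side_weight (h2 b) j')" by (rule Q_glue[OF Q2 aT bT ne j(1) j'(1) sdj])
      ultimately have "prod.swap (side_weight (h1 b) j') = prod.swap (side_weight (h2 b) j')" using pa by simp
      then have "side_weight (h1 b) j' = side_weight (h2 b) j'" by (metis swap_swap)
      then show "h1 b = h2 b" using sameL[OF bT j'(1)] j'(2) ab by simp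
    qed
  qed
  show ?thesis
  proof (rule ext)
    fix v show "h1 v = h2 v"
    proof (cases "v \<in> Tri")
      case False then show ?thesis using Q_off[OF Q1] Q_off[OF Q2] by simp
    next
      case True
      show ?thesis
      proof (cases "v \<in> \<Union>F")
        case True then show ?thesis using allP \<open>v \<in> Tri\<close> by simp
      next
        case False
        then have "h1 v = (\<lambda>k. 0)" "h2 v = (\<lambda>k. 0)"
          using nz_in_supp[OF Q1 \<open>v \<in> Tri\<close>] nz_in_supp[OF Q2 \<open>v \<in> Tri\<close>] s1 s2 by auto
        then show ?thesis by simp
      qed
    qed
  qed
qed

lemma two_gens:
  assumes F: "proper_subtree V E F"
  shows "card {w. min_gen V E sd w \<and> supp V E sd w = F} = 2"
proof -
  have FE: "F \<subseteq> E" and Fne: "F \<noteq> {}" using F unfolding proper_subtree_def by auto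
  obtain e0 where e0: "e0 \<in> F" using Fne by blast
  then have e0E: "e0 \<in> E" using FE by blast
  obtain v0 where v0: "v0 \<in> e0" "v0 \<in> Tri" using tri_edge e0E by blast
  obtain j0 where j0: "j0 \<in> {1,2,3}" "sd v0 j0 = e0" using sd_surj[OF v0(2) e0E v0(1)] by blast
  have j0F: "sd v0 j0 \<in> F" using j0 e0 by simp
  obtain g1 where g1: "good g1" "supp V E sd g1 = F" "side_weight (g1 v0) j0 = (1,0)"
    using exist_gen[OF F v0(2) j0(1) j0F, of "(1,0)"] by auto
  obtain g2 where g2: "good g2" "supp V E sd g2 = F" "side_weight (g2 v0) j0 = (0,1)"
    using exist_gen[OF F v0(2) j0(1) j0F, of "(0,1)"] by auto
  have ne: "g1 \<noteq> g2" using g1(3) g2(3) by auto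
  have "{w. min_gen V E sd w \<and> supp V E sd w = F} = {g1, g2}"
  proof
    show "{g1, g2} \<subseteq> {w. min_gen V E sd w \<and> supp V E sd w = F}" using g1 g2 min_iff by auto
  next
    show "{w. min_gen V E sd w \<and> supp V E sd w = F} \<subseteq> {g1, g2}"
    proof
      fix h assume "h \<in> {w. min_gen V E sd w \<and> supp V E sd w = F}"
      then have gh: "good h" and sh: "supp V E sd h = F" using min_iff by auto
      have Qh: "inQ V E sd h" and Gh: "h v0 = (\<lambda>k. 0) \<or> h v0 \<in> Gens" using gh v0(2) unfolding good_def by auto
      have nzh: "side_weight (h v0) j0 \<noteq> (0,0)" using sd_supp[OF Qh v0(2) j0(1)] sh j0F by simp
      then have "h v0 \<in> Gens" using Gh by (auto simp: sw_Z)
      then have "side_weight (h v0) j0 = (1,0) \<or> side_weight (h v0) j0 = (0,1)"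
        using gens_sw[OF _ j0(1)] nzh by auto
      then show "h \<in> {g1, g2}"
      proof
        assume "side_weight (h v0) j0 = (1,0)"
        then have "h = g1" using uniq_gen[OF gh g1(1) sh g1(2) F v0(2) j0(1) j0F] g1(3) by simp
        then show ?thesis by simp
      next
        assume "side_weight (h v0) j0 = (0,1)"
        then have "h = g2" using uniq_gen[OF gh g2(1) sh g2(2) F v0(2) j0(1) j0F] g2(3) by simp
        then show ?thesis by simp
      qed
    qed
  qed
  then show ?thesis using ne by simp
qed

end

context ctx0 begin

lemma reach_closed:
  assumes r: "(adj G)\<^sup>*\<^sup>* a z" and a: "a \<in> U" and cl: "\<And>u w. u \<in> U \<Longrightarrow> {u,w} \<in> G \<Longrightarrow> w \<in> U"
  shows "z \<in> U"
  using r
proof (induction rule: rtranclp_induct)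
  case base then show ?case by (rule a)
next
  case (step y z) then show ?case using cl unfolding adj_def by blast
qed

lemma UE: "\<Union>E = V"
proof
  show "\<Union>E \<subseteq> V" using E_sub by blast
next
  show "V \<subseteq> \<Union>E"
  proof
    fix v assume vV: "v \<in> V"
    have "deg E v \<noteq> 0" using degs[OF vV] by auto
    then have "{e \<in> E. v \<in> e} \<noteq> {}" unfolding deg_def by (metis card.empty)
    then show "v \<in> \<Union>E" by blast
  qed
qed

lemma iso_edge:
  assumes c: "graph_connected (\<Union>G) G" and f: "{x,y} \<in> G"
    and ox: "\<And>g. g \<in> G \<Longrightarrow> x \<in> g \<Longrightarrow> g = {x,y}" and oy: "\<And>g. g \<in> G \<Longrightarrow> y \<in> g \<Longrightarrow> g = {x,y}"
  shows "\<Union>G \<subseteq> {x,y}"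
proof
  fix z assume z: "z \<in> \<Union>G"
  have "x \<in> \<Union>G" using f by blast
  then have "(adj G)\<^sup>*\<^sup>* x z" using c z unfolding graph_connected_def by blast
  then show "z \<in> {x,y}"
  proof (rule reach_closed)
    show "x \<in> {x,y}" by simp
  next
    fix u w assume u: "u \<in> {x,y}" and uw: "{u,w} \<in> G"
    have "{u,w} = {x,y}" using u ox oy uw by blast
    moreover have "w \<in> {u,w}" by simp
    ultimately show "w \<in> {x,y}" by simp
  qed
qed

lemma tri_edge_lemma:
  assumes n3: "3 \<le> card (leaves V E)"
  shows "\<forall>e\<in>E. \<exists>v\<in>e. v \<in> Tri"
proof (rule ccontr)
  assume "\<not> (\<forall>e\<in>E. \<exists>v\<in>e. v \<in> Tri)"
  then obtain e where eE: "e \<in> E" and nt: "\<And>v. v \<in> e \<Longrightarrow> v \<notin> Tri" by blast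
  obtain x y where xy: "e = {x,y}" "x \<in> V" "y \<in> V" "x \<noteq> y" using E2[OF eE] by blast
  have ox: "\<And>g. g \<in> E \<Longrightarrow> x \<in> g \<Longrightarrow> g = {x,y}"
    using leaf_unique[OF xy(2) nt[of x] _ eE] xy(1) by auto
  have oy: "\<And>g. g \<in> E \<Longrightarrow> y \<in> g \<Longrightarrow> g = {x,y}"
    using leaf_unique[OF xy(3) nt[of y] _ eE] xy(1) by auto
  have c: "graph_connected (\<Union>E) E" using conn UE by simp
  have "\<Union>E \<subseteq> {x,y}" by (rule iso_edge[OF c _ ox oy]) (use eE xy in simp)
  then have "leaves V E \<subseteq> {x,y}" using UE unfolding leaves_def by auto
  then have "card (leaves V E) \<le> card {x,y}" by (rule card_mono[rotated]) simp
  also have "\<dots> \<le> 2" by (simp add: card_insert_if)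
  finally show False using n3 by simp
qed

lemma fin_reach: "G \<subseteq> E \<Longrightarrow> finite {z. (adj G)\<^sup>*\<^sup>* a z}"
proof -
  assume G: "G \<subseteq> E"
  have "{z. (adj G)\<^sup>*\<^sup>* a z} \<subseteq> insert a V"
  proof
    fix z assume "z \<in> {z. (adj G)\<^sup>*\<^sup>* a z}"
    then have "(adj G)\<^sup>*\<^sup>* a z" by simp
    then show "z \<in> insert a V"
    proof (rule reach_closed)
      show "a \<in> insert a V" by simp
    next
      fix u w assume "{u,w} \<in> G"
      then have "{u,w} \<subseteq> V" using G E_sub by blast
      then show "w \<in> insert a V" by simp
    qed
  qed
  then show ?thesis using finV finite_subset by blast
qed

definition Lf :: "'v set set \<Rightarrow> 'v set" where "Lf F = \<Union>F \<inter> leaves V E"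

lemma leaf_side_aux:
  assumes F: "proper_subtree V E F"
  shows "card {z. (adj (F - {e}))\<^sup>*\<^sup>* a z} = k \<Longrightarrow> e \<in> F \<Longrightarrow> a \<in> e \<Longrightarrow> \<exists>l\<in>Lf F. (adj (F - {e}))\<^sup>*\<^sup>* a l"
proof (induction k arbitrary: a e rule: less_induct)
  case (less k)
  have FE: "F \<subseteq> E" using F unfolding proper_subtree_def by blast
  have eE: "e \<in> E" using less(3) FE by blast
  have aV: "a \<in> V" using E_sub[OF eE] less(4) by blast
  have aF: "a \<in> \<Union>F" using less(3,4) by blast
  show ?case
  proof (cases "a \<in> leaves V E")
    case True then show ?thesis unfolding Lf_def using aF by blast
  next
    case False
    have aT: "a \<in> Tri" using False not_tri_leaf aV by blast
    have fin: "finite {g \<in> F. a \<in> g}" using finE FE by (simp add: finite_subset)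
    have "deg F a \<noteq> 1" using F aF False unfolding proper_subtree_def by blast
    moreover have "e \<in> {g \<in> F. a \<in> g}" using less(3,4) by simp
    ultimately have "{g \<in> F. a \<in> g} \<noteq> {e}"
    proof -
      assume d: "deg F a \<noteq> 1"
      show ?thesis
      proof
        assume "{g \<in> F. a \<in> g} = {e}"
        then have "deg F a = 1" unfolding deg_def by simp
        then show False using d by simp
      qed
    qed
    then obtain e' where e': "e' \<in> F" "a \<in> e'" "e' \<noteq> e" using \<open>e \<in> {g \<in> F. a \<in> g}\<close> by blast
    have e'E: "e' \<in> E" using e'(1) FE by blast
    obtain u w where uw: "e' = {u,w}" "u \<noteq> w" using E2[OF e'E] by blast
    define a' where "a' = (if u = a then w else u)"
    have ea': "e' = {a,a'}" using uw e'(2) unfolding a'_def by (cases "u = a") (auto simp: insert_commute)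
    have aa': "a \<noteq> a'" using uw e'(2) unfolding a'_def by (cases "u = a") auto
    define R where "R = {z. (adj (F - {e}))\<^sup>*\<^sup>* a z}"
    define R' where "R' = {z. (adj (F - {e'}))\<^sup>*\<^sup>* a' z}"
    have notin: "\<And>z. z \<in> R' \<Longrightarrow> z \<noteq> a"
    proof
      fix z assume "z \<in> R'" "z = a"
      then have "(adj (F - {e'}))\<^sup>*\<^sup>* a' a" unfolding R'_def by simp
      moreover have "F - {e'} \<subseteq> E - {{a,a'}}" using FE ea' by blast
      ultimately have "(adj (E - {{a,a'}}))\<^sup>*\<^sup>* a' a" by (rule rt_mono)
      then have p: "(adj (E - {{a,a'}}))\<^sup>*\<^sup>* a a'" by (rule rt_sym)
      have "{a,a'} \<in> E" using e'E ea' by simp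
      then show False using p by (rule T1)
    qed
    have sub: "R' \<subseteq> R"
    proof
      fix z assume zR': "z \<in> R'"
      have "(adj (F - {e'}))\<^sup>*\<^sup>* a' z" using zR' unfolding R'_def by simp
      then have "(adj (F - {e}))\<^sup>*\<^sup>* a' z"
      proof (induction rule: rtranclp_induct)
        case base then show ?case by simp
      next
        case (step y z)
        have "y \<in> R'" "z \<in> R'" unfolding R'_def using step(1,2) by auto
        then have "y \<noteq> a" "z \<noteq> a" using notin by blast+
        then have "{y,z} \<noteq> e" using less(4) by auto
        then have "adj (F - {e}) y z" using step(2) unfolding adj_def by simp
        then show ?case using step(3) by (rule rtranclp.rtrancl_into_rtrancl[rotated])
      qed
      moreover have "adj (F - {e}) a a'" unfolding adj_def using e' ea' by simp
      ultimately have "(adj (F - {e}))\<^sup>*\<^sup>* a z" by (rule converse_rtranclp_into_rtranclp[rotated])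
      then show "z \<in> R" unfolding R_def by simp
    qed
    have "a \<in> R" unfolding R_def by simp
    moreover have "a \<notin> R'" using notin by blast
    moreover have "finite R" unfolding R_def using fin_reach FE by blast
    ultimately have "R' \<subset> R" using sub by blast
    then have "card R' < card R" using \<open>finite R\<close> by (rule psubset_card_mono[rotated])
    then have lt: "card R' < k" unfolding R_def using less(2) by simp
    have a'e: "a' \<in> e'" using ea' by simp
    obtain l where l: "l \<in> Lf F" "(adj (F - {e'}))\<^sup>*\<^sup>* a' l"
      using less(1)[OF lt _ e'(1) a'e] unfolding R'_def by blast
    then have "l \<in> R" using sub unfolding R'_def by blast
    then show ?thesis using l(1) unfolding R_def by blast
  qed
qed

lemma leaf_side:
  assumes F: "proper_subtree V E F"
  shows "e \<in> F \<Longrightarrow> a \<in> e \<Longrightarrow> \<exists>l\<in>Lf F. (adj (F - {e}))\<^sup>*\<^sup>* a l"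
  using leaf_side_aux[OF F refl] by blast

lemma two_sides:
  assumes F: "proper_subtree V E F" and e: "{a,b} \<in> F"
  obtains la lb where "la \<in> Lf F" "lb \<in> Lf F" "(adj (F - {{a,b}}))\<^sup>*\<^sup>* a la" "(adj (F - {{a,b}}))\<^sup>*\<^sup>* b lb"
proof -
  have "\<exists>l\<in>Lf F. (adj (F - {{a,b}}))\<^sup>*\<^sup>* a l" by (rule leaf_side[OF F e]) simp
  moreover have "\<exists>l\<in>Lf F. (adj (F - {{a,b}}))\<^sup>*\<^sup>* b l" by (rule leaf_side[OF F e]) simp
  ultimately show ?thesis using that by blast
qed

lemma Lf_card:
  assumes F: "proper_subtree V E F"
  shows "2 \<le> card (Lf F)"
proof -
  have FE: "F \<subseteq> E" and Fne: "F \<noteq> {}" using F unfolding proper_subtree_def by auto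
  obtain e where eF: "e \<in> F" using Fne by blast
  then obtain a b where ab: "e = {a,b}" "a \<noteq> b" using E2 FE by blast
  obtain la lb where l: "la \<in> Lf F" "lb \<in> Lf F" "(adj (F - {{a,b}}))\<^sup>*\<^sup>* a la" "(adj (F - {{a,b}}))\<^sup>*\<^sup>* b lb"
    using two_sides[OF F] eF ab by blast
  have "la \<noteq> lb"
  proof
    assume "la = lb"
    then have "(adj (F - {{a,b}}))\<^sup>*\<^sup>* lb b" using rt_sym[OF l(4)] by simp
    moreover have "(adj (F - {{a,b}}))\<^sup>*\<^sup>* a lb" using l(3) \<open>la = lb\<close> by simp
    ultimately have "(adj (F - {{a,b}}))\<^sup>*\<^sup>* a b" by (rule rtranclp_trans[rotated])
    moreover have "F - {{a,b}} \<subseteq> E - {{a,b}}" using FE by blast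
    ultimately have "(adj (E - {{a,b}}))\<^sup>*\<^sup>* a b" by (rule rt_mono)
    moreover have "{a,b} \<in> E" using eF ab FE by blast
    ultimately show False using T1 by blast
  qed
  moreover have "finite (Lf F)" unfolding Lf_def leaves_def using finV by simp
  ultimately have "card {la, lb} \<le> card (Lf F)" using l(1,2) by (intro card_mono) auto
  then show ?thesis using \<open>la \<noteq> lb\<close> by simp
qed

lemma Lf_inj:
  assumes F1: "proper_subtree V E F1" and F2: "proper_subtree V E F2" and eq: "Lf F1 = Lf F2"
  shows "F1 \<subseteq> F2"
proof
  fix e assume eF: "e \<in> F1"
  have F1E: "F1 \<subseteq> E" using F1 unfolding proper_subtree_def by blast
  have F2E: "F2 \<subseteq> E" and c2: "graph_connected (\<Union>F2) F2" using F2 unfolding proper_subtree_def by auto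
  show "e \<in> F2"
  proof (rule ccontr)
    assume nF: "e \<notin> F2"
    obtain a b where ab: "e = {a,b}" "a \<noteq> b" using E2 F1E eF by blast
    obtain la lb where l: "la \<in> Lf F1" "lb \<in> Lf F1" "(adj (F1 - {{a,b}}))\<^sup>*\<^sup>* a la" "(adj (F1 - {{a,b}}))\<^sup>*\<^sup>* b lb"
      using two_sides[OF F1] eF ab by blast
    have "la \<in> \<Union>F2" "lb \<in> \<Union>F2" using l(1,2) eq unfolding Lf_def by auto
    then have "(adj F2)\<^sup>*\<^sup>* la lb" using c2 unfolding graph_connected_def by blast
    moreover have "F2 \<subseteq> E - {{a,b}}" using F2E nF ab by blast
    ultimately have m: "(adj (E - {{a,b}}))\<^sup>*\<^sup>* la lb" by (rule rt_mono)
    have sub1: "F1 - {{a,b}} \<subseteq> E - {{a,b}}" using F1E by blast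
    have "(adj (E - {{a,b}}))\<^sup>*\<^sup>* a la" using l(3) sub1 by (rule rt_mono)
    moreover have "(adj (E - {{a,b}}))\<^sup>*\<^sup>* b lb" using l(4) sub1 by (rule rt_mono)
    then have "(adj (E - {{a,b}}))\<^sup>*\<^sup>* lb b" by (rule rt_sym)
    ultimately have "(adj (E - {{a,b}}))\<^sup>*\<^sup>* a b" using m by (meson rtranclp_trans)
    moreover have "{a,b} \<in> E" using eF ab F1E by blast
    ultimately show False using T1 by blast
  qed
qed

end

lemma rt_map:
  assumes r: "R\<^sup>*\<^sup>* u v" and st: "\<And>a b. R a b \<Longrightarrow> S\<^sup>*\<^sup>* (f a) (f b)"
  shows "S\<^sup>*\<^sup>* (f u) (f v)"
  using r
proof (induction rule: rtranclp_induct)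
  case base then show ?case by simp
next
  case (step y z) then show ?case using st rtranclp_trans by metis
qed

lemma card_big_subsets:
  assumes fA: "finite A"
  shows "card {S. S \<subseteq> A \<and> 2 \<le> card S} = 2 ^ card A - card A - 1"
proof -
  let ?B = "{S. S \<subseteq> A \<and> 2 \<le> card S}"
  let ?S0 = "{S. S \<subseteq> A \<and> card S = 0}"
  let ?S1 = "{S. S \<subseteq> A \<and> card S = 1}"
  have eq: "Pow A = ?B \<union> (?S0 \<union> ?S1)" by auto
  have f1: "finite ?B" "finite (?S0 \<union> ?S1)" using fA by (auto intro: finite_subset[of _ "Pow A"])
  have f2: "finite ?S0" "finite ?S1" using fA by (auto intro: finite_subset[of _ "Pow A"])
  have c0: "card ?S0 = 1" using n_subsets[OF fA, of 0] by simp
  have c1: "card ?S1 = card A" using n_subsets[OF fA, of 1] by simp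
  have "card (?S0 \<union> ?S1) = card ?S0 + card ?S1" by (rule card_Un_disjoint[OF f2]) auto
  then have c01: "card (?S0 \<union> ?S1) = 1 + card A" using c0 c1 by simp
  have "card (Pow A) = card ?B + card (?S0 \<union> ?S1)" unfolding eq by (rule card_Un_disjoint[OF f1]) auto
  then have "2 ^ card A = card ?B + (1 + card A)" using card_Pow[of A] c01 fA by simp
  then show ?thesis by simp
qed

context ctx0 begin

lemma steiner:
  assumes SL: "S \<subseteq> leaves V E" and S2: "2 \<le> card S"
  shows "\<exists>F. proper_subtree V E F \<and> Lf F = S"
proof -
  define C where "C G \<longleftrightarrow> G \<subseteq> E \<and> graph_connected (\<Union>G) G \<and> S \<subseteq> \<Union>G" for G
  have "C E" unfolding C_def using conn UE SL unfolding leaves_def by auto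
  obtain G where CG: "C G" and mn: "\<And>G'. C G' \<Longrightarrow> card G \<le> card G'"
    using ex_has_least_nat[of C E card, OF \<open>C E\<close>] by blast
  have GE: "G \<subseteq> E" and Gc: "graph_connected (\<Union>G) G" and SG: "S \<subseteq> \<Union>G" using CG unfolding C_def by auto
  have finG: "finite G" using GE finE finite_subset by blast
  have Sne: "S \<noteq> {}" using S2 by auto
  have key: "\<And>x. x \<in> \<Union>G \<Longrightarrow> deg G x = 1 \<Longrightarrow> x \<in> S"
  proof (rule ccontr)
    fix x assume xG: "x \<in> \<Union>G" and d: "deg G x = 1" and xS: "x \<notin> S"
    obtain f where fx: "{g \<in> G. x \<in> g} = {f}" using d unfolding deg_def using card_1_singletonE by blast
    have fG: "f \<in> G" and xf: "x \<in> f" using fx by blast+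
    have ox: "\<And>g. g \<in> G \<Longrightarrow> x \<in> g \<Longrightarrow> g = f" using fx by blast
    have fE: "f \<in> E" using fG GE by blast
    obtain u w where uw: "f = {u,w}" "u \<noteq> w" using E2[OF fE] by blast
    define y where "y = (if u = x then w else u)"
    have fxy: "f = {x,y}" and xy: "x \<noteq> y" using uw xf unfolding y_def by auto
    define G' where "G' = G - {f}"
    have cardlt: "card G' < card G" unfolding G'_def by (rule card_Diff1_less[OF finG fG])
    have xG': "\<And>g. g \<in> G' \<Longrightarrow> x \<notin> g" unfolding G'_def using ox by blast
    have "C G'" unfolding C_def
    proof (intro conjI)
      show "G' \<subseteq> E" unfolding G'_def using GE by blast
    next
      show "S \<subseteq> \<Union>G'"
      proof
        fix s assume sS: "s \<in> S"
        then obtain g where g: "g \<in> G" "s \<in> g" using SG by blast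
        have sx: "s \<noteq> x" using sS xS by blast
        show "s \<in> \<Union>G'"
        proof (cases "g = f")
          case False then show ?thesis unfolding G'_def using g by blast
        next
          case True
          then have sy: "s = y" using g(2) fxy sx by auto
          show ?thesis
          proof (cases "\<exists>g'\<in>G. y \<in> g' \<and> g' \<noteq> f")
            case True then show ?thesis unfolding G'_def using sy by blast
          next
            case False
            then have oy: "\<And>g. g \<in> G \<Longrightarrow> y \<in> g \<Longrightarrow> g = {x,y}" using fxy by blast
            have "\<Union>G \<subseteq> {x,y}" using iso_edge[OF Gc _ _ oy] fG fxy ox by blast
            then have "S \<subseteq> {y}" using SG xS by blast
            then have "card S \<le> card {y}" by (rule card_mono[rotated]) simp
            then show ?thesis using S2 by simp
          qed
        qed
      qed
    next
      show "graph_connected (\<Union>G') G'"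
        unfolding graph_connected_def
      proof (intro ballI)
        fix a b assume a: "a \<in> \<Union>G'" and b: "b \<in> \<Union>G'"
        have ax: "a \<noteq> x" "b \<noteq> x" using a b xG' by blast+
        have "a \<in> \<Union>G" "b \<in> \<Union>G" using a b unfolding G'_def by auto
        then have r: "(adj G)\<^sup>*\<^sup>* a b" using Gc unfolding graph_connected_def by blast
        define \<phi> where "\<phi> z = (if z = x then y else z)" for z
        have "(adj G')\<^sup>*\<^sup>* (\<phi> a) (\<phi> b)"
        proof (rule rt_map[OF r])
          fix p q assume pq: "adj G p q"
          then have pqG: "{p,q} \<in> G" unfolding adj_def .
          show "(adj G')\<^sup>*\<^sup>* (\<phi> p) (\<phi> q)"
          proof (cases "{p,q} = f")
            case True
            then have "p \<in> {x,y}" "q \<in> {x,y}" using fxy by auto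
            then have "\<phi> p = y" "\<phi> q = y" unfolding \<phi>_def using xy by auto
            then show ?thesis by simp
          next
            case False
            then have "x \<notin> {p,q}" using ox pqG by blast
            then have "\<phi> p = p" "\<phi> q = q" unfolding \<phi>_def by auto
            moreover have "adj G' p q" unfolding adj_def G'_def using pqG False by simp
            ultimately show ?thesis by simp
          qed
        qed
        then show "(adj G')\<^sup>*\<^sup>* a b" unfolding \<phi>_def using ax by simp
      qed
    qed
    then have "card G \<le> card G'" by (rule mn)
    then show False using cardlt by simp
  qed
  have PG: "proper_subtree V E G" unfolding proper_subtree_def
  proof (intro conjI ballI impI)
    show "G \<subseteq> E" by (rule GE)
    show "G \<noteq> {}" using SG Sne by blast
    show "graph_connected (\<Union>G) G" by (rule Gc)
  next
    fix x assume "x \<in> \<Union>G" "deg G x = 1"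
    then show "x \<in> leaves V E" using key SL by blast
  qed
  have "Lf G = S"
  proof
    show "S \<subseteq> Lf G" unfolding Lf_def using SG SL by blast
  next
    show "Lf G \<subseteq> S"
    proof
      fix x assume "x \<in> Lf G"
      then have xG: "x \<in> \<Union>G" and xl: "x \<in> leaves V E" unfolding Lf_def by auto
      have "{g \<in> G. x \<in> g} \<subseteq> {e \<in> E. x \<in> e}" using GE by blast
      then have "deg G x \<le> deg E x" unfolding deg_def using deg_fin by (rule card_mono[rotated])
      moreover have "deg E x = 1" using xl unfolding leaves_def by simp
      moreover have "deg G x \<noteq> 0"
      proof -
        have "finite {g \<in> G. x \<in> g}" using finG by simp
        moreover have "{g \<in> G. x \<in> g} \<noteq> {}" using xG by blast
        ultimately show ?thesis unfolding deg_def by simp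
      qed
      ultimately have "deg G x = 1" by simp
      then show "x \<in> S" using key xG by blast
    qed
  qed
  then show ?thesis using PG by blast
qed

lemma count_PS: "card {F. proper_subtree V E F} = 2 ^ card (leaves V E) - card (leaves V E) - 1"
proof -
  have "bij_betw Lf {F. proper_subtree V E F} {S. S \<subseteq> leaves V E \<and> 2 \<le> card S}"
    unfolding bij_betw_def
  proof
    show "inj_on Lf {F. proper_subtree V E F}"
    proof (rule inj_onI)
      fix F1 F2 assume "F1 \<in> {F. proper_subtree V E F}" "F2 \<in> {F. proper_subtree V E F}" "Lf F1 = Lf F2"
      then show "F1 = F2" using Lf_inj by (metis mem_Collect_eq subset_antisym)
    qed
  next
    show "Lf ` {F. proper_subtree V E F} = {S. S \<subseteq> leaves V E \<and> 2 \<le> card S}"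
    proof
      show "Lf ` {F. proper_subtree V E F} \<subseteq> {S. S \<subseteq> leaves V E \<and> 2 \<le> card S}"
        using Lf_card unfolding Lf_def by auto
    next
      show "{S. S \<subseteq> leaves V E \<and> 2 \<le> card S} \<subseteq> Lf ` {F. proper_subtree V E F}"
        using steiner by blast
    qed
  qed
  then have "card {F. proper_subtree V E F} = card {S. S \<subseteq> leaves V E \<and> 2 \<le> card S}"
    by (rule bij_betw_same_card)
  also have "\<dots> = 2 ^ card (leaves V E) - card (leaves V E) - 1"
    by (rule card_big_subsets) (simp add: leaves_def finV)
  finally show ?thesis .
qed

lemma fin_PS: "finite {F. proper_subtree V E F}"
proof -
  have "{F. proper_subtree V E F} \<subseteq> Pow E" unfolding proper_subtree_def by blast
  then show ?thesis using finE finite_subset by blast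
qed

end

theorem mainTheorem2:
  fixes V :: "'v set" and E :: "'v set set" and sd :: "'v \<Rightarrow> nat \<Rightarrow> 'v set"
    and lab :: "'v \<Rightarrow> nat" and n :: nat
  assumes "trivalent_tree V E"
    and "bij_betw lab (leaves V E) {1..n}"
    and "n \<ge> 3"
    and "side_labelling V E sd"
  shows "(\<forall>E'. proper_subtree V E E' \<longrightarrow> card {w. min_gen V E sd w \<and> supp V E sd w = E'} = 2)
    \<and> (\<forall>w. min_gen V E sd w \<longrightarrow> proper_subtree V E (supp V E sd w))
    \<and> card {w. min_gen V E sd w} = 2 * (2 ^ n - n - 1)"
proof -
  interpret c0: ctx0 V E sd using assms(1,4) by unfold_locales
  have nl: "card (leaves V E) = n" using bij_betw_same_card[OF assms(2)] by simp
  have te: "\<forall>e\<in>E. \<exists>v\<in>e. v \<in> trinodes V E" using c0.tri_edge_lemma nl assms(3) by simp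
  interpret c: ctx V E sd using assms(1,4) te by unfold_locales
  have P1: "\<forall>E'. proper_subtree V E E' \<longrightarrow> card {w. min_gen V E sd w \<and> supp V E sd w = E'} = 2"
    using c.two_gens by blast
  have P2: "\<forall>w. min_gen V E sd w \<longrightarrow> proper_subtree V E (supp V E sd w)"
    using c.min_iff c.good_proper by blast
  let ?PS = "{F. proper_subtree V E F}"
  let ?A = "\<lambda>F. {w. min_gen V E sd w \<and> supp V E sd w = F}"
  have eq: "{w. min_gen V E sd w} = (\<Union>F\<in>?PS. ?A F)" using P2 by blast
  have finA: "\<And>F. F \<in> ?PS \<Longrightarrow> finite (?A F)"
  proof -
    fix F assume "F \<in> ?PS"
    then have "card (?A F) = 2" using P1 by blast
    then show "finite (?A F)" by (intro card_ge_0_finite) simp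
  qed
  have "card (\<Union>F\<in>?PS. ?A F) = (\<Sum>F\<in>?PS. card (?A F))"
  proof (rule card_UN_disjoint[OF c0.fin_PS])
    show "\<forall>i\<in>?PS. finite (?A i)" using finA by blast
    show "\<forall>i\<in>?PS. \<forall>j\<in>?PS. i \<noteq> j \<longrightarrow> ?A i \<inter> ?A j = {}" by blast
  qed
  also have "\<dots> = (\<Sum>F\<in>?PS. 2)" using P1 by (intro sum.cong) auto
  also have "\<dots> = 2 * card ?PS" by simp
  also have "card ?PS = 2 ^ n - n - 1" using c0.count_PS nl by simp
  finally have P3: "card {w. min_gen V E sd w} = 2 * (2 ^ n - n - 1)" using eq by simp
  show ?thesis using P1 P2 P3 by blast
qed

end
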